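(* Let $1 \le p < \infty$, let $L^p([0,1])$ denote the (complex) Lebesgue space on $[0,1]$ with Lebesgue measure $\lambda$, and let $T \in \mathcal{B}(L^p([0,1]))$ be a narrow operator. Then for every $\gamma \in \mathbb{C}$, $$\|I - T\|_{L^p \to L^p} + \inf_{\|u\|_{L^p} = 1} \|(\gamma I - T)u\|_{L^p} \ge \|I - \gamma \mathbf{E}\|_{L^p \to L^p},$$ and in particular $$\|I - T\|_{L^p \to L^p} + \inf_{\|u\|_{L^p} = 1} \|(I - T)u\|_{L^p} \ge C_p .$$
   Context: $\mathcal{B}(X)$ denotes the bounded linear operators on a Banach space $X$ and $I$ the identity operator. $\mathbf{E}$ is the operator $\mathbf{E}f := \left(\int_0^1 f\,d\lambda\right)\mathbf{1}$, where $\mathbf{1}$ is the constant function $1$ on $[0,1]$. A measurable function $g$ is a sign on a measurable set $A$ if $g$ takes values in $\{-1,0,1\}$ and $g^2 = \mathbb{I}_A$ (indicator of $A$); it is of mean zero if $\int g\,d\lambda = 0$. An operator $T \in \mathcal{B}(L^p([0,1]), Y)$ ($Y$ a Banach space) is narrow if for every measurable $A$ with $\lambda(A) > 0$ and every $\varepsilon > 0$ there exists a mean zero sign $g$ on $A$ with $\|Tg\| < \varepsilon$. The constant $C_p$ is defined by $C_1 := 2$ and, for $1 < p < \infty$, $$C_p := \max_{0 \le \alpha \le 1} \left(\alpha^{p-1} + (1-\alpha)^{p-1}\right)^{\frac1p} \left(\alpha^{\frac{1}{p-1}} + (1-\alpha)^{\frac{1}{p-1}}\right)^{1-\frac1p}.$$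 *)

theory Defs
  imports "HOL-Analysis.Analysis"
begin

text \<open>Elements of L^p are equivalence classes mod a.e. equality; operators are
  required to respect a.e. equality.\<close>

abbreviation M01 :: "real measure" where
  "M01 \<equiv> lebesgue_on {0..1}"

definition Lp_space :: "real \<Rightarrow> (real \<Rightarrow> complex) set" where
  "Lp_space p = {f. f \<in> borel_measurable M01 \<and> integrable M01 (\<lambda>x. cmod (f x) powr p)}"

definition lp_norm :: "real \<Rightarrow> (real \<Rightarrow> complex) \<Rightarrow> real" where
  "lp_norm p f = (\<integral>x. cmod (f x) powr p \<partial>M01) powr (1 / p)"

definition bounded_op :: "real \<Rightarrow> ((real \<Rightarrow> complex) \<Rightarrow> (real \<Rightarrow> complex)) \<Rightarrow> bool" where
  "bounded_op p T \<longleftrightarrow>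
     (\<forall>f\<in>Lp_space p. T f \<in> Lp_space p) \<and>
     (\<forall>f\<in>Lp_space p. \<forall>g\<in>Lp_space p. (AE x in M01. f x = g x) \<longrightarrow> (AE x in M01. T f x = T g x)) \<and>
     (\<forall>f\<in>Lp_space p. \<forall>g\<in>Lp_space p. \<forall>a b::complex.
        AE x in M01. T (\<lambda>y. a * f y + b * g y) x = a * T f x + b * T g x) \<and>
     (\<exists>C. \<forall>f\<in>Lp_space p. lp_norm p (T f) \<le> C * lp_norm p f)"

definition op_norm :: "real \<Rightarrow> ((real \<Rightarrow> complex) \<Rightarrow> (real \<Rightarrow> complex)) \<Rightarrow> real" where
  "op_norm p T = Sup {lp_norm p (T f) | f. f \<in> Lp_space p \<and> lp_norm p f = 1}"

definition idop :: "(real \<Rightarrow> complex) \<Rightarrow> (real \<Rightarrow> complex)" where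
  "idop f = f"

definition Eop :: "(real \<Rightarrow> complex) \<Rightarrow> (real \<Rightarrow> complex)" where
  "Eop f = (\<lambda>x. \<integral>y. f y \<partial>M01)"

definition op_diff :: "((real \<Rightarrow> complex) \<Rightarrow> (real \<Rightarrow> complex)) \<Rightarrow> ((real \<Rightarrow> complex) \<Rightarrow> (real \<Rightarrow> complex))
    \<Rightarrow> ((real \<Rightarrow> complex) \<Rightarrow> (real \<Rightarrow> complex))" where
  "op_diff S T = (\<lambda>f x. S f x - T f x)"

definition op_scale :: "complex \<Rightarrow> ((real \<Rightarrow> complex) \<Rightarrow> (real \<Rightarrow> complex)) \<Rightarrow> ((real \<Rightarrow> complex) \<Rightarrow> (real \<Rightarrow> complex))" where
  "op_scale c T = (\<lambda>f x. c * T f x)"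

definition is_sign_on :: "real set \<Rightarrow> (real \<Rightarrow> complex) \<Rightarrow> bool" where
  "is_sign_on A g \<longleftrightarrow> g \<in> borel_measurable M01 \<and>
     (\<forall>x\<in>{0..1}. g x \<in> {-1, 0, 1} \<and> (g x)\<^sup>2 = indicator A x)"

definition mean_zero :: "(real \<Rightarrow> complex) \<Rightarrow> bool" where
  "mean_zero g \<longleftrightarrow> (\<integral>x. g x \<partial>M01) = 0"

definition narrow :: "real \<Rightarrow> ((real \<Rightarrow> complex) \<Rightarrow> (real \<Rightarrow> complex)) \<Rightarrow> bool" where
  "narrow p T \<longleftrightarrow> (\<forall>A \<in> sets M01. measure M01 A > 0 \<longrightarrow>
     (\<forall>\<epsilon>>0. \<exists>g. is_sign_on A g \<and> mean_zero g \<and> lp_norm p (T g) < \<epsilon>))"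

definition Cp :: "real \<Rightarrow> real" where
  "Cp p = (if p = 1 then 2 else
     (SUP \<alpha>\<in>{0..1::real}. (\<alpha> powr (p - 1) + (1 - \<alpha>) powr (p - 1)) powr (1 / p)
        * (\<alpha> powr (1 / (p - 1)) + (1 - \<alpha>) powr (1 / (p - 1))) powr (1 - 1 / p)))"

end

theory Submission
  imports Defs
begin

lemma space_M01[simp]: "space M01 = {0..1}"
  by (simp add: space_lebesgue_on)

lemma emeasure_M01_space: "emeasure M01 {0..1} = 1"
  by (simp add: emeasure_restrict_space)

lemma fin_M01: "finite_measure M01"
  by (rule finite_measureI) (simp add: emeasure_M01_space)

lemma measure_M01_space: "measure M01 {0..1} = 1"
  by (simp add: measure_def emeasure_M01_space)

lemma measure_M01_le1: "measure M01 A \<le> 1"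
  using finite_measure.bounded_measure[OF fin_M01, of A] by (simp add: measure_M01_space)

lemma integrable_const_M01[simp]: "integrable M01 (\<lambda>x. c::'a::{banach, second_countable_topology})"
  using finite_measure.integrable_const[OF fin_M01] .

lemma integral_const_M01[simp]: "(\<integral>x. c \<partial>M01) = (c::'a::{banach, second_countable_topology})"
  by (simp add: measure_M01_space)

lemma cvx2:
  fixes x y t p :: real
  assumes "0 \<le> x" "0 \<le> y" "0 \<le> t" "t \<le> 1" "1 \<le> p"
  shows "(t * x + (1 - t) * y) powr p \<le> t * x powr p + (1 - t) * y powr p"
proof (cases "x = 0 \<or> y = 0")
  case True
  have aux: "(s * z) powr p \<le> s * z powr p" if "0 \<le> s" "s \<le> 1" "0 \<le> z" for s z :: real
  proof (cases "s = 0")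
    case True then show ?thesis by simp
  next
    case False
    then have "(s * z) powr p = s powr p * z powr p" using that by (simp add: powr_mult)
    also have "\<dots> \<le> s * z powr p"
      using powr_le_one_le[of s p] that False assms by (intro mult_right_mono) auto
    finally show ?thesis .
  qed
  show ?thesis
  proof (cases "x = 0")
    case True
    then show ?thesis using aux[of "1 - t" y] assms by simp
  next
    case False
    then have "y = 0" using True by simp
    then show ?thesis using aux[of t x] assms by simp
  qed
next
  case False
  then have "x > 0" "y > 0" using assms by auto
  then show ?thesis
    using convex_onD[OF powr_convex[OF assms(5)], of t y x] assms by (auto simp: add_ac)
qed

definition ipow :: "real \<Rightarrow> (real \<Rightarrow> complex) \<Rightarrow> real" where
  "ipow p f = (\<integral>x. cmod (f x) powr p \<partial>M01)"

lemma ipow_nonneg: "0 \<le> ipow p f"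
  unfolding ipow_def by (intro integral_nonneg_AE) auto

lemma lp_norm_ipow: "lp_norm p f = ipow p f powr (1/p)"
  by (simp add: lp_norm_def ipow_def)

lemma lp_norm_nonneg: "0 \<le> lp_norm p f"
  by (simp add: lp_norm_def)

lemma lp_norm_powr: "0 < p \<Longrightarrow> lp_norm p f powr p = ipow p f"
  using ipow_nonneg[of p f] by (simp add: lp_norm_ipow powr_powr)

lemma ipow_lp_norm: "0 < p \<Longrightarrow> ipow p f = lp_norm p f powr p"
  using lp_norm_powr by simp

lemma Lp_measurable: "f \<in> Lp_space p \<Longrightarrow> f \<in> borel_measurable M01"
  by (simp add: Lp_space_def)

lemma Lp_integrable_pow: "f \<in> Lp_space p \<Longrightarrow> integrable M01 (\<lambda>x. cmod (f x) powr p)"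
  by (simp add: Lp_space_def)

lemma Lp_bounded:
  assumes "f \<in> borel_measurable M01" "\<And>x. x \<in> {0..1} \<Longrightarrow> cmod (f x) \<le> B" "0 < p"
  shows "f \<in> Lp_space p"
  unfolding Lp_space_def
proof (intro CollectI conjI assms(1))
  show "integrable M01 (\<lambda>x. cmod (f x) powr p)"
  proof (rule Bochner_Integration.integrable_bound[where f="\<lambda>x. B powr p"])
    show "integrable M01 (\<lambda>x. B powr p)" by simp
    show "(\<lambda>x. cmod (f x) powr p) \<in> borel_measurable M01"
      using assms(1) by measurable
    show "AE x in M01. norm (cmod (f x) powr p) \<le> norm (B powr p)"
      using assms(2,3) by (auto intro!: AE_I2 powr_mono2 order.trans[OF _ abs_ge_self])
  qed
qed

lemma powr_sum_bound:
  fixes a b p :: real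
  assumes "0 \<le> a" "0 \<le> b" "0 < p"
  shows "(a + b) powr p \<le> 2 powr p * (a powr p + b powr p)"
proof -
  have "(a + b) powr p \<le> (2 * max a b) powr p"
    using assms by (intro powr_mono2) auto
  also have "\<dots> = 2 powr p * (max a b) powr p"
    using assms by (simp add: powr_mult)
  also have "\<dots> \<le> 2 powr p * (a powr p + b powr p)"
    using assms by (intro mult_left_mono) (auto simp: max_def)
  finally show ?thesis .
qed

lemma Lp_lincomb:
  assumes f: "f \<in> Lp_space p" and g: "g \<in> Lp_space p" and p: "0 < p"
  shows "(\<lambda>x. a * f x + b * g x) \<in> Lp_space p"
  unfolding Lp_space_def
proof (intro CollectI conjI)
  have fm: "f \<in> borel_measurable M01" and gm: "g \<in> borel_measurable M01"
    using f g by (auto simp: Lp_space_def)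
  then show m: "(\<lambda>x. a * f x + b * g x) \<in> borel_measurable M01" by measurable
  show "integrable M01 (\<lambda>x. cmod (a * f x + b * g x) powr p)"
  proof (rule Bochner_Integration.integrable_bound[where
        f="\<lambda>x. 2 powr p * ((cmod a) powr p * cmod (f x) powr p + (cmod b) powr p * cmod (g x) powr p)"])
    show "integrable M01 (\<lambda>x. 2 powr p * ((cmod a) powr p * cmod (f x) powr p + (cmod b) powr p * cmod (g x) powr p))"
      using f g by (auto simp: Lp_space_def)
    show "(\<lambda>x. cmod (a * f x + b * g x) powr p) \<in> borel_measurable M01"
      using m by measurable
    show "AE x in M01. norm (cmod (a * f x + b * g x) powr p) \<le> norm (2 powr p * ((cmod a) powr p * cmod (f x) powr p + (cmod b) powr p * cmod (g x) powr p))"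
    proof (rule AE_I2)
      fix x
      have "cmod (a * f x + b * g x) powr p \<le> (cmod (a * f x) + cmod (b * g x)) powr p"
        using p by (intro powr_mono2 norm_triangle_ineq) auto
      also have "\<dots> \<le> 2 powr p * (cmod (a * f x) powr p + cmod (b * g x) powr p)"
        using p by (intro powr_sum_bound) auto
      also have "\<dots> = 2 powr p * ((cmod a) powr p * cmod (f x) powr p + (cmod b) powr p * cmod (g x) powr p)"
        by (simp add: norm_mult powr_mult)
      finally show "norm (cmod (a * f x + b * g x) powr p) \<le> norm (2 powr p * ((cmod a) powr p * cmod (f x) powr p + (cmod b) powr p * cmod (g x) powr p))"
        by simp
    qed
  qed
qed

lemma Lp_scale: "f \<in> Lp_space p \<Longrightarrow> 0 < p \<Longrightarrow> (\<lambda>x. a * f x) \<in> Lp_space p"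
  using Lp_lincomb[of f p f a 0] by simp

lemma Lp_add: "f \<in> Lp_space p \<Longrightarrow> g \<in> Lp_space p \<Longrightarrow> 0 < p \<Longrightarrow> (\<lambda>x. f x + g x) \<in> Lp_space p"
  using Lp_lincomb[of f p g 1 1] by simp

lemma Lp_diff: "f \<in> Lp_space p \<Longrightarrow> g \<in> Lp_space p \<Longrightarrow> 0 < p \<Longrightarrow> (\<lambda>x. f x - g x) \<in> Lp_space p"
  using Lp_lincomb[of f p g 1 "-1"] by simp

lemma Lp_const: "0 < p \<Longrightarrow> (\<lambda>x. c) \<in> Lp_space p"
  by (rule Lp_bounded[where B="cmod c"]) auto

lemma Lp_integrable:
  assumes f: "f \<in> Lp_space p" and p: "1 \<le> p"
  shows "integrable M01 f"
proof (rule Bochner_Integration.integrable_bound[where f="\<lambda>x. 1 + cmod (f x) powr p"])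
  show "integrable M01 (\<lambda>x. 1 + cmod (f x) powr p)" using f by (auto simp: Lp_space_def)
  show "f \<in> borel_measurable M01" using f by (auto simp: Lp_space_def)
  show "AE x in M01. norm (f x) \<le> norm (1 + cmod (f x) powr p)"
  proof (rule AE_I2)
    fix x
    have "cmod (f x) \<le> 1 + cmod (f x) powr p"
    proof (cases "cmod (f x) \<le> 1")
      case True then show ?thesis by (simp add: add_increasing2)
    next
      case False
      then have "cmod (f x) powr 1 \<le> cmod (f x) powr p" using p by (intro powr_mono) auto
      then show ?thesis using False by simp
    qed
    then show "norm (f x) \<le> norm (1 + cmod (f x) powr p)" by simp
  qed
qed

lemma lp_norm_scale:
  assumes "0 < p"
  shows "lp_norm p (\<lambda>x. c * f x) = cmod c * lp_norm p f"
proof -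
  have "ipow p (\<lambda>x. c * f x) = cmod c powr p * ipow p f"
    unfolding ipow_def by (simp add: norm_mult powr_mult)
  then show ?thesis
    using ipow_nonneg[of p f] assms
    by (simp add: lp_norm_ipow powr_mult powr_powr)
qed

lemma lp_norm_cong:
  assumes "f \<in> borel_measurable M01" "g \<in> borel_measurable M01" "AE x in M01. f x = g x"
  shows "lp_norm p f = lp_norm p g"
proof -
  have "ipow p f = ipow p g"
    unfolding ipow_def using assms by (intro integral_cong_AE) (auto elim: AE_mp)
  then show ?thesis by (simp add: lp_norm_ipow)
qed

lemma lp_norm_cong_space:
  assumes "\<And>x. x \<in> {0..1} \<Longrightarrow> f x = g x"
  shows "lp_norm p f = lp_norm p g"
proof -
  have "ipow p f = ipow p g"
    unfolding ipow_def using assms by (intro Bochner_Integration.integral_cong) auto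
  then show ?thesis by (simp add: lp_norm_ipow)
qed

lemma lp_norm_const: "0 < p \<Longrightarrow> lp_norm p (\<lambda>x. c) = cmod c"
  by (simp add: lp_norm_def powr_powr measure_M01_space)

lemma lp_norm_commute: "lp_norm p (\<lambda>x. f x - g x) = lp_norm p (\<lambda>x. g x - f x)"
  by (simp add: lp_norm_def norm_minus_commute)

lemma minkowski:
  assumes f: "f \<in> Lp_space p" and g: "g \<in> Lp_space p" and p: "1 \<le> p"
  shows "lp_norm p (\<lambda>x. f x + g x) \<le> lp_norm p f + lp_norm p g"
proof (rule field_le_epsilon)
  fix e :: real assume e: "0 < e"
  define a where "a = lp_norm p f"
  define b where "b = lp_norm p g"
  define a' where "a' = a + e/2"
  define b' where "b' = b + e/2"
  define s where "s = a' + b'"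
  have a0: "0 \<le> a" "0 \<le> b" unfolding a_def b_def by (auto simp: lp_norm_nonneg)
  then have a'0: "0 < a'" "0 < b'" "0 < s" using e unfolding a'_def b'_def s_def by auto
  define t where "t = a' / s"
  have t: "0 \<le> t" "t \<le> 1" "1 - t = b' / s" using a'0 unfolding t_def s_def by (auto simp: field_simps)
  have p0: "0 < p" using p by simp
  have pw: "cmod (f x + g x) powr p \<le>
      s powr p * (t / a' powr p * cmod (f x) powr p + (1 - t) / b' powr p * cmod (g x) powr p)" for x
  proof -
    have "cmod (f x + g x) powr p \<le> (cmod (f x) + cmod (g x)) powr p"
      using p0 by (intro powr_mono2 norm_triangle_ineq) auto
    also have "cmod (f x) + cmod (g x) = s * (t * (cmod (f x) / a') + (1 - t) * (cmod (g x) / b'))"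
      proof -
        have e1: "t * (cmod (f x) / a') = cmod (f x) / s" unfolding t_def using a'0 by simp
        have e2: "(1 - t) * (cmod (g x) / b') = cmod (g x) / s" unfolding t(3) using a'0 by simp
        show ?thesis unfolding e1 e2 using a'0 by (simp add: field_simps)
      qed
    also have "(s * (t * (cmod (f x) / a') + (1 - t) * (cmod (g x) / b'))) powr p
        = s powr p * (t * (cmod (f x) / a') + (1 - t) * (cmod (g x) / b')) powr p"
      by (rule powr_mult)
    also have "\<dots> \<le> s powr p * (t * (cmod (f x) / a') powr p + (1 - t) * (cmod (g x) / b') powr p)"
      using a'0 t p by (intro mult_left_mono cvx2) auto
    also have "\<dots> = s powr p * (t / a' powr p * cmod (f x) powr p + (1 - t) / b' powr p * cmod (g x) powr p)"
      using a'0 by (simp add: powr_divide)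
    finally show ?thesis .
  qed
  have "ipow p (\<lambda>x. f x + g x) \<le>
      (\<integral>x. s powr p * (t / a' powr p * cmod (f x) powr p + (1 - t) / b' powr p * cmod (g x) powr p) \<partial>M01)"
    unfolding ipow_def
    using Lp_integrable_pow[OF Lp_add[OF f g p0]] Lp_integrable_pow[OF f] Lp_integrable_pow[OF g]
    by (intro integral_mono pw) auto
  also have "\<dots> = s powr p * (t / a' powr p * ipow p f + (1 - t) / b' powr p * ipow p g)"
    unfolding ipow_def
    using Lp_integrable_pow[OF f] Lp_integrable_pow[OF g] by simp
  also have "\<dots> = s powr p * (t * (a / a') powr p + (1 - t) * (b / b') powr p)"
    using ipow_lp_norm[OF p0] a0 a'0 unfolding a_def b_def by (simp add: powr_divide)
  also have "\<dots> \<le> s powr p * (t * 1 + (1 - t) * 1)"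
    using a0 a'0 t e p0 unfolding a'_def b'_def
    by (intro mult_left_mono add_mono mult_left_mono powr_le1) auto
  finally have "ipow p (\<lambda>x. f x + g x) \<le> s powr p" by simp
  then have "ipow p (\<lambda>x. f x + g x) powr (1/p) \<le> (s powr p) powr (1/p)"
    using ipow_nonneg p0 by (intro powr_mono2) auto
  then have "lp_norm p (\<lambda>x. f x + g x) \<le> s"
    using a'0 p0 by (simp add: lp_norm_ipow powr_powr)
  then show "lp_norm p (\<lambda>x. f x + g x) \<le> lp_norm p f + lp_norm p g + e"
    unfolding s_def a'_def b'_def a_def b_def by simp
qed

lemma minkowski_diff:
  assumes f: "f \<in> Lp_space p" and g: "g \<in> Lp_space p" and p: "1 \<le> p"
  shows "lp_norm p (\<lambda>x. f x - g x) \<le> lp_norm p f + lp_norm p g"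
proof -
  have "lp_norm p (\<lambda>x. f x + (-1) * g x) \<le> lp_norm p f + lp_norm p (\<lambda>x. (-1) * g x)"
    using p by (intro minkowski f Lp_scale g) auto
  also have "lp_norm p (\<lambda>x. (-1) * g x) = lp_norm p g"
    using p by (subst lp_norm_scale) auto
  finally show ?thesis by simp
qed


lemma Lp_sum:
  assumes "finite I" "\<And>i. i \<in> I \<Longrightarrow> f i \<in> Lp_space p" "0 < p"
  shows "(\<lambda>x. \<Sum>i\<in>I. f i x) \<in> Lp_space p"
  using assms
proof (induction I rule: finite_induct)
  case empty then show ?case using Lp_const[of p 0] by simp
next
  case (insert i I)
  then show ?case using Lp_add[of "f i" p "\<lambda>x. \<Sum>i\<in>I. f i x"] by simp
qed

lemma minkowski_sum:
  assumes "finite I" "\<And>i. i \<in> I \<Longrightarrow> f i \<in> Lp_space p" "1 \<le> p"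
  shows "lp_norm p (\<lambda>x. \<Sum>i\<in>I. f i x) \<le> (\<Sum>i\<in>I. lp_norm p (f i))"
  using assms
proof (induction I rule: finite_induct)
  case empty then show ?case using lp_norm_const[of p 0] by simp
next
  case (insert i I)
  have "lp_norm p (\<lambda>x. \<Sum>i\<in>insert i I. f i x) = lp_norm p (\<lambda>x. f i x + (\<Sum>i\<in>I. f i x))"
    using insert by simp
  also have "\<dots> \<le> lp_norm p (f i) + lp_norm p (\<lambda>x. \<Sum>i\<in>I. f i x)"
    using insert by (intro minkowski Lp_sum) auto
  also have "\<dots> \<le> lp_norm p (f i) + (\<Sum>i\<in>I. lp_norm p (f i))"
    using insert by simp
  finally show ?case using insert by simp
qed

context
  fixes p :: real and T :: "(real \<Rightarrow> complex) \<Rightarrow> (real \<Rightarrow> complex)"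
  assumes p: "1 \<le> p" and bT: "bounded_op p T"
begin

lemma p0: "0 < p" using p by simp

lemma T_Lp: "f \<in> Lp_space p \<Longrightarrow> T f \<in> Lp_space p"
  using bT by (simp add: bounded_op_def)

lemma T_meas: "f \<in> Lp_space p \<Longrightarrow> T f \<in> borel_measurable M01"
  using T_Lp Lp_measurable by blast

lemma T_congAE: "f \<in> Lp_space p \<Longrightarrow> g \<in> Lp_space p \<Longrightarrow> (AE x in M01. f x = g x) \<Longrightarrow> AE x in M01. T f x = T g x"
  using bT by (simp add: bounded_op_def)

lemma T_cong: "f \<in> Lp_space p \<Longrightarrow> g \<in> Lp_space p \<Longrightarrow> (\<And>x. x \<in> {0..1} \<Longrightarrow> f x = g x) \<Longrightarrow> AE x in M01. T f x = T g x"
  by (rule T_congAE) (auto intro!: AE_I2)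

lemma T_lin: "f \<in> Lp_space p \<Longrightarrow> g \<in> Lp_space p \<Longrightarrow> AE x in M01. T (\<lambda>y. a * f y + b * g y) x = a * T f x + b * T g x"
  using bT by (simp add: bounded_op_def)

lemma T_scale: assumes "f \<in> Lp_space p" shows "AE x in M01. T (\<lambda>y. a * f y) x = a * T f x"
  using T_lin[OF assms assms, of a 0] by simp

lemma T_bound: "\<exists>C\<ge>0. \<forall>f\<in>Lp_space p. lp_norm p (T f) \<le> C * lp_norm p f"
proof -
  obtain C where C: "\<forall>f\<in>Lp_space p. lp_norm p (T f) \<le> C * lp_norm p f"
    using bT by (auto simp: bounded_op_def)
  show ?thesis
  proof (intro exI[of _ "max C 0"] conjI ballI)
    fix f assume "f \<in> Lp_space p"
    then have "lp_norm p (T f) \<le> C * lp_norm p f" using C by blast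
    also have "\<dots> \<le> max C 0 * lp_norm p f" by (intro mult_right_mono) (auto simp: lp_norm_nonneg)
    finally show "lp_norm p (T f) \<le> max C 0 * lp_norm p f" .
  qed simp
qed

lemma T_sum:
  assumes "finite I" "\<And>i. i \<in> I \<Longrightarrow> f i \<in> Lp_space p"
  shows "AE x in M01. T (\<lambda>y. \<Sum>i\<in>I. c i * f i y) x = (\<Sum>i\<in>I. c i * T (f i) x)"
  using assms
proof (induction I rule: finite_induct)
  case empty
  have "AE x in M01. T (\<lambda>y. 0 * (\<lambda>y. 0) y + 0 * (\<lambda>y. 0) y) x = 0 * T (\<lambda>y. 0) x + 0 * T (\<lambda>y. 0) x"
    using p0 by (intro T_lin Lp_const)
  then show ?case by simp
next
  case (insert i I)
  have L1: "(\<lambda>y. \<Sum>i\<in>I. c i * f i y) \<in> Lp_space p"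
    using insert p0 by (intro Lp_sum Lp_scale) auto
  have fi: "f i \<in> Lp_space p" using insert by simp
  have "AE x in M01. T (\<lambda>y. c i * f i y + 1 * (\<lambda>y. \<Sum>i\<in>I. c i * f i y) y) x
      = c i * T (f i) x + 1 * T (\<lambda>y. \<Sum>i\<in>I. c i * f i y) x"
    by (intro T_lin fi L1)
  moreover have "AE x in M01. T (\<lambda>y. \<Sum>i\<in>I. c i * f i y) x = (\<Sum>i\<in>I. c i * T (f i) x)"
    using insert by simp
  ultimately show ?case using insert by (auto elim: AE_mp)
qed

definition opIT where "opIT = op_diff idop T"

lemma opIT_apply: "op_diff idop T f = (\<lambda>x. f x - T f x)"
  by (simp add: op_diff_def idop_def)

lemma IT_Lp: "f \<in> Lp_space p \<Longrightarrow> (\<lambda>x. f x - T f x) \<in> Lp_space p"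
  using T_Lp p0 by (intro Lp_diff) auto

lemma IT_bdd: "bdd_above {lp_norm p (op_diff idop T f) |f. f \<in> Lp_space p \<and> lp_norm p f = 1}"
proof -
  obtain C where C: "C \<ge> 0" "\<forall>f\<in>Lp_space p. lp_norm p (T f) \<le> C * lp_norm p f"
    using T_bound by blast
  show ?thesis
  proof (rule bdd_aboveI[where M="1 + C"])
    fix y assume "y \<in> {lp_norm p (op_diff idop T f) |f. f \<in> Lp_space p \<and> lp_norm p f = 1}"
    then obtain f where f: "f \<in> Lp_space p" "lp_norm p f = 1" "y = lp_norm p (\<lambda>x. f x - T f x)"
      by (auto simp: opIT_apply)
    have "y \<le> lp_norm p f + lp_norm p (T f)"
      using f(3) minkowski_diff[OF f(1) T_Lp[OF f(1)] p] by simp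
    also have "\<dots> \<le> 1 + C" using C f by auto
    finally show "y \<le> 1 + C" .
  qed
qed

lemma IT_nonempty: "{lp_norm p (op_diff idop T f) |f. f \<in> Lp_space p \<and> lp_norm p f = 1} \<noteq> {}"
  using Lp_const[OF p0, of 1] lp_norm_const[OF p0, of 1] by auto

lemma opnorm_IT_nonneg: "0 \<le> op_norm p (op_diff idop T)"
proof -
  obtain y where "y \<in> {lp_norm p (op_diff idop T f) |f. f \<in> Lp_space p \<and> lp_norm p f = 1}"
    using IT_nonempty by blast
  then have "y \<le> op_norm p (op_diff idop T)" "0 \<le> y"
    unfolding op_norm_def using IT_bdd by (auto intro: cSup_upper simp: lp_norm_nonneg)
  then show ?thesis by simp
qed

lemma IT_norm_le:
  assumes f: "f \<in> Lp_space p"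
  shows "lp_norm p (\<lambda>x. f x - T f x) \<le> op_norm p (op_diff idop T) * lp_norm p f"
proof (cases "lp_norm p f = 0")
  case True
  obtain C where C: "C \<ge> 0" "\<forall>f\<in>Lp_space p. lp_norm p (T f) \<le> C * lp_norm p f"
    using T_bound by blast
  have "lp_norm p (\<lambda>x. f x - T f x) \<le> lp_norm p f + lp_norm p (T f)"
    using minkowski_diff[OF f T_Lp[OF f] p] by simp
  also have "\<dots> \<le> 0" using C f True by fastforce
  finally show ?thesis using True by simp
next
  case False
  define r where "r = lp_norm p f"
  have r: "r > 0" using False lp_norm_nonneg[of p f] unfolding r_def by simp
  define g where "g = (\<lambda>x. (1/r) * f x)"
  have g: "g \<in> Lp_space p" unfolding g_def using f p0 by (intro Lp_scale)
  have gn: "lp_norm p g = 1" unfolding g_def using r p0 lp_norm_scale[OF p0, of "1/r" f] by (simp add: r_def norm_divide)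
  have "lp_norm p (op_diff idop T g) \<le> op_norm p (op_diff idop T)"
    unfolding op_norm_def using g gn by (intro cSup_upper IT_bdd) auto
  moreover have "lp_norm p (op_diff idop T g) = lp_norm p (\<lambda>x. (1/r) * (f x - T f x))"
    unfolding opIT_apply
  proof (rule lp_norm_cong)
    show "(\<lambda>x. g x - T g x) \<in> borel_measurable M01" using IT_Lp[OF g] Lp_measurable by blast
    show "(\<lambda>x. complex_of_real (1 / r) * (f x - T f x)) \<in> borel_measurable M01"
      using IT_Lp[OF f] Lp_measurable by measurable
    show "AE x in M01. g x - T g x = complex_of_real (1 / r) * (f x - T f x)"
      using T_scale[OF f, of "1/r"] unfolding g_def by (auto elim!: AE_mp simp: algebra_simps)
  qed
  moreover have "lp_norm p (\<lambda>x. (1/r) * (f x - T f x)) = (1/r) * lp_norm p (\<lambda>x. f x - T f x)"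
    using p0 r by (subst lp_norm_scale) (auto simp: norm_divide)
  ultimately have "(1/r) * lp_norm p (\<lambda>x. f x - T f x) \<le> op_norm p (op_diff idop T)" by simp
  then show ?thesis using r unfolding r_def by (simp add: field_simps)
qed

end

lemma cmod_indicator[simp]: "cmod (indicator A x :: complex) = indicator A x"
  by (simp split: split_indicator)

lemma Lp_indicator: "A \<in> sets M01 \<Longrightarrow> 0 < p \<Longrightarrow> (indicator A :: real \<Rightarrow> complex) \<in> Lp_space p"
  by (rule Lp_bounded[where B=1]) auto

lemma lp_norm_indicator:
  assumes "A \<in> sets M01" "0 < p"
  shows "lp_norm p (indicator A :: real \<Rightarrow> complex) = measure M01 A powr (1/p)"
proof -
  have "(\<lambda>x. cmod (indicator A x :: complex) powr p) = indicator A"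
    using assms by (auto split: split_indicator)
  then have "ipow p (indicator A :: real \<Rightarrow> complex) = measure M01 A"
    unfolding ipow_def using sets.sets_into_space[OF assms(1)] by (simp add: Int_absorb2)
  then show ?thesis by (simp add: lp_norm_ipow)
qed

lemma integral_indicator_complex:
  assumes "A \<in> sets M01"
  shows "(\<integral>x. (indicator A x :: complex) \<partial>M01) = of_real (measure M01 A)"
proof -
  have "(\<integral>x. (indicator A x :: complex) \<partial>M01) = (\<integral>x. complex_of_real (indicator A x) \<partial>M01)"
    by (intro Bochner_Integration.integral_cong) (auto split: split_indicator)
  also have "\<dots> = of_real (measure M01 A)"
    using sets.sets_into_space[OF assms(1)] by (simp add: Int_absorb2)
  finally show ?thesis .
qed

definition good :: "real \<Rightarrow> ((real \<Rightarrow> complex) \<Rightarrow> (real \<Rightarrow> complex)) \<Rightarrow> real set \<Rightarrow> nat \<Rightarrow> (nat \<Rightarrow> real set) \<Rightarrow> real \<Rightarrow> bool" where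
  "good p T A K Q \<delta> \<longleftrightarrow>
    (\<forall>l<K. Q l \<in> sets M01 \<and> Q l \<subseteq> A \<and> measure M01 (Q l) = measure M01 A / K \<and>
       lp_norm p (\<lambda>x. T (indicator (Q l)) x - (1 / of_nat K) * T (indicator A) x) \<le> \<delta>) \<and>
    (\<forall>l<K. \<forall>l'<K. l \<noteq> l' \<longrightarrow> Q l \<inter> Q l' = {}) \<and> (\<Union>l<K. Q l) = A"

context
  fixes p :: real and T :: "(real \<Rightarrow> complex) \<Rightarrow> (real \<Rightarrow> complex)"
  assumes p: "1 \<le> p" and bT: "bounded_op p T" and nT: "narrow p T"
begin

lemma p0': "0 < p" using p by simp

lemma T_ind_Lp: "A \<in> sets M01 \<Longrightarrow> T (indicator A) \<in> Lp_space p"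
  using T_Lp[OF p bT] Lp_indicator p0' by blast

lemma halve:
  assumes A: "A \<in> sets M01" and d: "0 < \<delta>"
  shows "\<exists>H. H \<in> sets M01 \<and> H \<subseteq> A \<and> measure M01 H = measure M01 A / 2 \<and>
     lp_norm p (\<lambda>x. T (indicator H) x - (1/2) * T (indicator A) x) \<le> \<delta>"
proof (cases "measure M01 A = 0")
  case True
  obtain C where C: "C \<ge> 0" "\<forall>f\<in>Lp_space p. lp_norm p (T f) \<le> C * lp_norm p f"
    using T_bound[OF p bT] by blast
  have "lp_norm p (\<lambda>x. T (indicator {}) x - (1/2) * T (indicator A) x)
      \<le> lp_norm p (T (indicator {})) + lp_norm p (\<lambda>x. (1/2) * T (indicator A) x)"
    using p0' A by (intro minkowski_diff p T_ind_Lp Lp_scale) auto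
  also have "\<dots> = lp_norm p (T (indicator {})) + (1/2) * lp_norm p (T (indicator A))"
    using p0' by (subst lp_norm_scale) auto
  also have "\<dots> \<le> C * lp_norm p (indicator {} :: real \<Rightarrow> complex) + (1/2) * (C * lp_norm p (indicator A :: real \<Rightarrow> complex))"
    using C A Lp_indicator[OF _ p0'] by (intro add_mono mult_left_mono) auto
  also have "\<dots> = 0"
    using True A p0' by (simp add: lp_norm_indicator)
  finally show ?thesis using d True by (intro exI[of _ "{}"]) auto
next
  case False
  then have mA: "measure M01 A > 0" using measure_nonneg[of M01 A] by linarith
  obtain g where g: "is_sign_on A g" "mean_zero g" "lp_norm p (T g) < 2 * \<delta>"
    using nT A mA d unfolding narrow_def by (metis mult_pos_pos zero_less_numeral)
  have gm: "g \<in> borel_measurable M01" and gv: "\<And>x. x \<in> {0..1} \<Longrightarrow> g x \<in> {-1, 0, 1} \<and> (g x)\<^sup>2 = indicator A x"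
    using g(1) unfolding is_sign_on_def by auto
  have Asub: "A \<subseteq> {0..1}" using sets.sets_into_space[OF A] by simp
  define H where "H = g -` {1} \<inter> space M01"
  define N where "N = g -` {-1} \<inter> space M01"
  have Hs: "H \<in> sets M01" unfolding H_def by (rule measurable_sets[OF gm]) auto
  have Ns: "N \<in> sets M01" unfolding N_def by (rule measurable_sets[OF gm]) auto
  have inA: "x \<in> A \<longleftrightarrow> g x \<noteq> 0" if "x \<in> {0..1}" for x
  proof
    assume "x \<in> A" then have "(g x)\<^sup>2 = 1" using gv[OF that] by simp
    then show "g x \<noteq> 0" by auto
  next
    assume "g x \<noteq> 0" then have "(g x)\<^sup>2 \<noteq> 0" by simp
    then show "x \<in> A" using gv[OF that] by (auto simp: indicator_def split: if_splits)
  qed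
  have HA: "H \<subseteq> A" unfolding H_def using inA by auto
  have NA: "N \<subseteq> A" unfolding N_def using inA by auto
  have HN: "H \<inter> N = {}" unfolding H_def N_def by auto
  have AHN: "A = H \<union> N"
  proof
    show "A \<subseteq> H \<union> N"
    proof
      fix x assume x: "x \<in> A"
      then have x01: "x \<in> {0..1}" using Asub by auto
      then have "g x \<noteq> 0" using inA x by auto
      then show "x \<in> H \<union> N" using gv[OF x01] x01 unfolding H_def N_def by auto
    qed
  qed (use HA NA in auto)
  have gHN: "g x = indicator H x - indicator N x" if "x \<in> {0..1}" for x
    using gv[OF that] that unfolding H_def N_def by (auto split: split_indicator)
  have AHNi: "(indicator A x :: complex) = indicator H x + indicator N x" for x
    unfolding AHN using HN by (auto split: split_indicator)
  have "(\<integral>x. g x \<partial>M01) = (\<integral>x. (indicator H x - indicator N x :: complex) \<partial>M01)"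
    by (intro Bochner_Integration.integral_cong) (auto simp: gHN)
  also have "\<dots> = of_real (measure M01 H) - of_real (measure M01 N)"
    using Hs Ns by (subst Bochner_Integration.integral_diff)
      (auto simp: integral_indicator_complex intro!: Lp_integrable[OF Lp_indicator[OF _ p0'] p])
  finally have "measure M01 H = measure M01 N"
    using g(2) unfolding mean_zero_def by simp
  moreover have "measure M01 A = measure M01 H + measure M01 N"
    unfolding AHN using Hs Ns HN by (intro finite_measure.finite_measure_Union[OF fin_M01])
  ultimately have mH: "measure M01 H = measure M01 A / 2" by simp
  have gL: "g \<in> Lp_space p"
  proof (rule Lp_bounded[where B=1, OF gm _ p0'])
    fix x assume "x \<in> {0..1::real}"
    then have "g x = -1 \<or> g x = 0 \<or> g x = 1" using gv by auto
    then show "cmod (g x) \<le> 1" by auto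
  qed
  have eqH: "(indicator H :: real \<Rightarrow> complex) x = (1/2) * indicator A x + (1/2) * g x" if "x \<in> {0..1}" for x
    using that by (simp add: gHN AHNi field_simps)
  have "AE x in M01. T (indicator H) x = T (\<lambda>y. (1/2) * indicator A y + (1/2) * g y) x"
    using Hs A gL p0' by (intro T_cong[OF p bT] Lp_indicator Lp_lincomb eqH) auto
  moreover have "AE x in M01. T (\<lambda>y. (1/2) * indicator A y + (1/2) * g y) x = (1/2) * T (indicator A) x + (1/2) * T g x"
    using A gL p0' by (intro T_lin[OF p bT] Lp_indicator)
  ultimately have ae: "AE x in M01. T (indicator H) x - (1/2) * T (indicator A) x = (1/2) * T g x"
    by (auto elim!: AE_mp)
  have "lp_norm p (\<lambda>x. T (indicator H) x - (1/2) * T (indicator A) x) = lp_norm p (\<lambda>x. (1/2) * T g x)"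
    using ae Hs A gL T_meas[OF p bT] Lp_indicator[OF _ p0'] by (intro lp_norm_cong) auto
  also have "\<dots> = (1/2) * lp_norm p (T g)" using p0' by (subst lp_norm_scale) auto
  also have "\<dots> \<le> \<delta>" using g(3) by simp
  finally show ?thesis using Hs HA mH by blast
qed

lemma norm_comb:
  assumes X: "X \<in> Lp_space p" and Y: "Y \<in> Lp_space p" and Z: "\<And>x. Z x = X x + c * Y x"
  shows "lp_norm p Z \<le> lp_norm p X + cmod c * lp_norm p Y"
proof -
  have "Z = (\<lambda>x. X x + c * Y x)" using Z by auto
  then have "lp_norm p Z \<le> lp_norm p X + lp_norm p (\<lambda>x. c * Y x)"
    using X Y p p0' by (simp add: minkowski Lp_scale)
  also have "lp_norm p (\<lambda>x. c * Y x) = cmod c * lp_norm p Y" using p0' by (rule lp_norm_scale)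
  finally show ?thesis .
qed

lemma dyadic_step:
  assumes A: "A \<in> sets M01" and d: "0 < \<delta>" and G: "good p T A K Q \<delta>" and K: "K > 0"
  shows "\<exists>Q'. good p T A (2 * K) Q' \<delta>"
proof -
  have Q: "\<And>l. l < K \<Longrightarrow> Q l \<in> sets M01 \<and> Q l \<subseteq> A \<and> measure M01 (Q l) = measure M01 A / K \<and>
       lp_norm p (\<lambda>x. T (indicator (Q l)) x - (1 / of_nat K) * T (indicator A) x) \<le> \<delta>"
    and Qd: "\<And>l l'. l < K \<Longrightarrow> l' < K \<Longrightarrow> l \<noteq> l' \<Longrightarrow> Q l \<inter> Q l' = {}"
    and QU: "(\<Union>l<K. Q l) = A"
    using G unfolding good_def by auto
  have "\<forall>l. \<exists>H. l < K \<longrightarrow> (H \<in> sets M01 \<and> H \<subseteq> Q l \<and> measure M01 H = measure M01 (Q l) / 2 \<and>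
     lp_norm p (\<lambda>x. T (indicator H) x - (1/2) * T (indicator (Q l)) x) \<le> \<delta>/2)"
  proof
    fix l
    show "\<exists>H. l < K \<longrightarrow> (H \<in> sets M01 \<and> H \<subseteq> Q l \<and> measure M01 H = measure M01 (Q l) / 2 \<and>
     lp_norm p (\<lambda>x. T (indicator H) x - (1/2) * T (indicator (Q l)) x) \<le> \<delta>/2)"
    proof (cases "l < K")
      case True
      have "0 < \<delta>/2" using d by simp
      from halve[OF _ this, of "Q l"] Q[OF True] show ?thesis by blast
    qed auto
  qed
  from choice[OF this] obtain H where H0: "\<forall>l. l < K \<longrightarrow> (H l \<in> sets M01 \<and> H l \<subseteq> Q l \<and> measure M01 (H l) = measure M01 (Q l) / 2 \<and>
     lp_norm p (\<lambda>x. T (indicator (H l)) x - (1/2) * T (indicator (Q l)) x) \<le> \<delta>/2)" ..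
  have H: "\<And>l. l < K \<Longrightarrow> H l \<in> sets M01 \<and> H l \<subseteq> Q l \<and> measure M01 (H l) = measure M01 (Q l) / 2 \<and>
     lp_norm p (\<lambda>x. T (indicator (H l)) x - (1/2) * T (indicator (Q l)) x) \<le> \<delta>/2"
    using H0 by blast
  define Q' where "Q' m = (if m < K then H m else Q (m - K) - H (m - K))" for m
  have piece: "Q' m \<in> sets M01 \<and> Q' m \<subseteq> Q (m mod K) \<and> measure M01 (Q' m) = measure M01 (Q (m mod K)) / 2 \<and>
     lp_norm p (\<lambda>x. T (indicator (Q' m)) x - (1/2) * T (indicator (Q (m mod K))) x) \<le> \<delta>/2" if m: "m < 2 * K" for m
  proof (cases "m < K")
    case True
    then show ?thesis using H[OF True] by (simp add: Q'_def)
  next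
    case False
    define l where "l = m - K"
    have l: "l < K" "m mod K = l" using m False unfolding l_def by (auto simp: le_mod_geq)
    have Q'm: "Q' m = Q l - H l" using False unfolding Q'_def l_def by simp
    have Hl: "H l \<in> sets M01" "H l \<subseteq> Q l" "measure M01 (H l) = measure M01 (Q l) / 2"
      "lp_norm p (\<lambda>x. T (indicator (H l)) x - (1/2) * T (indicator (Q l)) x) \<le> \<delta>/2"
      using H[OF l(1)] by auto
    have Ql: "Q l \<in> sets M01" using Q[OF l(1)] by auto
    have ms: "Q l - H l \<in> sets M01" using Hl Ql by auto
    have meas: "measure M01 (Q l - H l) = measure M01 (Q l) / 2"
      using finite_measure.finite_measure_Diff[OF fin_M01 Ql Hl(1) Hl(2)] Hl(3) by simp
    have "AE x in M01. T (indicator (Q l - H l)) x = T (\<lambda>y. 1 * indicator (Q l) y + (-1) * indicator (H l) y) x"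
      using ms Ql Hl(1) p0' Hl(2) by (intro T_cong[OF p bT] Lp_indicator Lp_lincomb) (auto split: split_indicator)
    moreover have "AE x in M01. T (\<lambda>y. 1 * indicator (Q l) y + (-1) * indicator (H l) y) x
        = 1 * T (indicator (Q l)) x + (-1) * T (indicator (H l)) x"
      using Ql Hl(1) p0' by (intro T_lin[OF p bT] Lp_indicator)
    ultimately have ae0: "AE x in M01. T (indicator (Q l - H l)) x = T (indicator (Q l)) x - T (indicator (H l)) x"
      by eventually_elim simp
    then have ae: "AE x in M01. T (indicator (Q l - H l)) x - (1/2) * T (indicator (Q l)) x
        = (-1) * (T (indicator (H l)) x - (1/2) * T (indicator (Q l)) x)"
      by eventually_elim (simp add: algebra_simps)
    have "lp_norm p (\<lambda>x. T (indicator (Q l - H l)) x - (1/2) * T (indicator (Q l)) x)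
        = lp_norm p (\<lambda>x. (-1) * (T (indicator (H l)) x - (1/2) * T (indicator (Q l)) x))"
      using ae ms Ql Hl(1) T_meas[OF p bT] Lp_indicator[OF _ p0'] by (intro lp_norm_cong) auto
    also have "\<dots> = lp_norm p (\<lambda>x. T (indicator (H l)) x - (1/2) * T (indicator (Q l)) x)"
      using p0' by (subst lp_norm_scale) auto
    finally show ?thesis using Q'm l ms meas Hl Q[OF l(1)] by auto
  qed
  show ?thesis
  proof (intro exI[of _ Q'], unfold good_def, intro conjI allI impI)
    fix m assume m: "m < 2 * K"
    have l: "m mod K < K" using K by simp
    note pm = piece[OF m] and ql = Q[OF l]
    show "Q' m \<in> sets M01" using pm by simp
    show "Q' m \<subseteq> A" using pm ql by blast
    show "measure M01 (Q' m) = measure M01 A / real (2 * K)" using pm ql by simp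
    have "lp_norm p (\<lambda>x. T (indicator (Q' m)) x - (1 / of_nat (2 * K)) * T (indicator A) x)
        \<le> lp_norm p (\<lambda>x. T (indicator (Q' m)) x - (1/2) * T (indicator (Q (m mod K))) x)
          + cmod (1/2) * lp_norm p (\<lambda>x. T (indicator (Q (m mod K))) x - (1 / of_nat K) * T (indicator A) x)"
    proof (rule norm_comb)
      show "(\<lambda>x. T (indicator (Q' m)) x - 1 / 2 * T (indicator (Q (m mod K))) x) \<in> Lp_space p"
        using pm ql p0' by (intro Lp_diff Lp_scale T_ind_Lp) auto
      show "(\<lambda>x. T (indicator (Q (m mod K))) x - 1 / of_nat K * T (indicator A) x) \<in> Lp_space p"
        using A ql p0' by (intro Lp_diff Lp_scale T_ind_Lp) auto
      fix x
      show "T (indicator (Q' m)) x - 1 / of_nat (2 * K) * T (indicator A) x =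
         T (indicator (Q' m)) x - 1 / 2 * T (indicator (Q (m mod K))) x +
         1 / 2 * (T (indicator (Q (m mod K))) x - 1 / of_nat K * T (indicator A) x)"
        using K by (simp add: field_simps)
    qed
    also have "\<dots> \<le> \<delta>/2 + (1/2) * \<delta>" using pm ql by (intro add_mono) auto
    finally show "lp_norm p (\<lambda>x. T (indicator (Q' m)) x - (1 / of_nat (2 * K)) * T (indicator A) x) \<le> \<delta>"
      by simp
  next
    fix m m' assume m: "m < 2 * K" and m': "m' < 2 * K" and ne: "m \<noteq> m'"
    show "Q' m \<inter> Q' m' = {}"
    proof (cases "m mod K = m' mod K")
      case True
      have mm: "m mod K = (if m < K then m else m - K)" using m by (simp add: le_mod_geq)
      have mm': "m' mod K = (if m' < K then m' else m' - K)" using m' by (simp add: le_mod_geq)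
      show ?thesis
      proof (cases "m < K")
        case c1: True
        then have "\<not> m' < K" "m' - K = m" using mm mm' True ne by (auto split: if_splits)
        then show ?thesis using c1 unfolding Q'_def by auto
      next
        case c1: False
        then have "m' < K" "m - K = m'" using mm mm' True ne m m' by (auto split: if_splits)
        then show ?thesis using c1 unfolding Q'_def by auto
      qed
    next
      case False
      have "Q (m mod K) \<inter> Q (m' mod K) = {}" using Qd False K by simp
      then show ?thesis using piece[OF m] piece[OF m'] by blast
    qed
  next
    show "(\<Union>m<2 * K. Q' m) = A"
    proof
      show "(\<Union>m<2 * K. Q' m) \<subseteq> A"
      proof (rule UN_least)
        fix m assume "m \<in> {..<2 * K}"
        then have "m < 2 * K" by simp
        then show "Q' m \<subseteq> A" using piece Q K by (meson mod_less_divisor order.trans)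
      qed
      show "A \<subseteq> (\<Union>m<2 * K. Q' m)"
      proof
        fix x assume "x \<in> A"
        then obtain l where l: "l < K" "x \<in> Q l" using QU by auto
        show "x \<in> (\<Union>m<2 * K. Q' m)"
        proof (cases "x \<in> H l")
          case True then show ?thesis using l unfolding Q'_def by (intro UN_I[of l]) auto
        next
          case False then show ?thesis using l unfolding Q'_def by (intro UN_I[of "l + K"]) auto
        qed
      qed
    qed
  qed
qed

lemma dyadic:
  assumes A: "A \<in> sets M01" and d: "0 < \<delta>"
  shows "\<exists>Q. good p T A (2 ^ k) Q \<delta>"
proof (induction k)
  case 0
  have "good p T A 1 (\<lambda>_. A) \<delta>"
    unfolding good_def using A d by (auto simp: lp_norm_const[OF p0'])
  then show ?case by auto
next
  case (Suc k)
  then obtain Q where "good p T A (2 ^ k) Q \<delta>" by blast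
  from dyadic_step[OF A d this] show ?case by simp
qed

end

lemma disj_sum:
  fixes c :: "'i \<Rightarrow> 'a::ring_1" and g :: "'a \<Rightarrow> 'b::ring_1"
  assumes I: "finite I" and dj: "\<And>i j. i \<in> I \<Longrightarrow> j \<in> I \<Longrightarrow> i \<noteq> j \<Longrightarrow> S i \<inter> S j = {}" and g0: "g 0 = 0"
  shows "g (\<Sum>i\<in>I. c i * indicator (S i) x) = (\<Sum>i\<in>I. g (c i) * indicator (S i) x)"
proof (cases "\<exists>i\<in>I. x \<in> S i")
  case True
  then obtain i where i: "i \<in> I" "x \<in> S i" by blast
  have ind: "\<And>j. j \<in> I \<Longrightarrow> (indicator (S j) x :: 'z::ring_1) = (if j = i then 1 else 0)"
    using dj i by (auto split: split_indicator)
  have "(\<Sum>j\<in>I. c j * indicator (S j) x) = (\<Sum>j\<in>I. if j = i then c j else 0)"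
    by (intro sum.cong) (auto simp: ind)
  also have "\<dots> = c i" using I i by simp
  finally have 1: "(\<Sum>j\<in>I. c j * indicator (S j) x) = c i" .
  have "(\<Sum>j\<in>I. g (c j) * indicator (S j) x) = (\<Sum>j\<in>I. if j = i then g (c j) else 0)"
    by (intro sum.cong) (auto simp: ind)
  also have "\<dots> = g (c i)" using I i by simp
  finally show ?thesis using 1 by simp
next
  case False
  then show ?thesis using g0 by (simp add: indicator_def)
qed

lemma integral_indsum_real:
  assumes "finite I" "\<And>i. i \<in> I \<Longrightarrow> S i \<in> sets M01"
  shows "(\<integral>x. (\<Sum>i\<in>I. r i * indicator (S i) x) \<partial>M01) = (\<Sum>i\<in>I. r i * measure M01 (S i))"
proof -
  have int: "integrable M01 (\<lambda>x. r i * indicator (S i) x)" if "i \<in> I" for i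
    using assms(2)[OF that] finite_measure.emeasure_finite[OF fin_M01]
    by (intro integrable_mult_right integrable_real_indicator) (auto simp: less_top)
  have "(\<integral>x. (\<Sum>i\<in>I. r i * indicator (S i) x) \<partial>M01) = (\<Sum>i\<in>I. (\<integral>x. r i * indicator (S i) x \<partial>M01))"
    using int by (intro Bochner_Integration.integral_sum) auto
  also have "\<dots> = (\<Sum>i\<in>I. r i * measure M01 (S i))"
  proof (intro sum.cong refl)
    fix i assume i: "i \<in> I"
    have "S i \<inter> {0..1} = S i" using sets.sets_into_space[OF assms(2)[OF i]] by auto
    then show "(\<integral>x. r i * indicator (S i) x \<partial>M01) = r i * measure M01 (S i)" by simp
  qed
  finally show ?thesis .
qed

lemma sum_ind_single:
  fixes c :: "'i \<Rightarrow> 'a::ring_1"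
  assumes I: "finite I" and dj: "\<And>i j. i \<in> I \<Longrightarrow> j \<in> I \<Longrightarrow> i \<noteq> j \<Longrightarrow> S i \<inter> S j = {}"
    and i: "i \<in> I" "x \<in> S i"
  shows "(\<Sum>j\<in>I. c j * indicator (S j) x) = c i"
proof -
  have ind: "\<And>j. j \<in> I \<Longrightarrow> (indicator (S j) x :: 'a) = (if j = i then 1 else 0)"
    using dj i by (auto split: split_indicator)
  have "(\<Sum>j\<in>I. c j * indicator (S j) x) = (\<Sum>j\<in>I. if j = i then c j else 0)"
    by (intro sum.cong) (auto simp: ind)
  also have "\<dots> = c i" using I i by simp
  finally show ?thesis .
qed

lemma ipow_cong_space:
  assumes "\<And>x. x \<in> {0..1} \<Longrightarrow> f x = g x"
  shows "ipow p f = ipow p g"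
  unfolding ipow_def using assms by (intro Bochner_Integration.integral_cong) auto

lemma ipow_indsum:
  fixes c :: "'i \<Rightarrow> complex"
  assumes I: "finite I" and dj: "\<And>i j. i \<in> I \<Longrightarrow> j \<in> I \<Longrightarrow> i \<noteq> j \<Longrightarrow> S i \<inter> S j = {}"
    and S: "\<And>i. i \<in> I \<Longrightarrow> S i \<in> sets M01" and p: "0 < p"
  shows "ipow p (\<lambda>x. \<Sum>i\<in>I. c i * indicator (S i) x) = (\<Sum>i\<in>I. cmod (c i) powr p * measure M01 (S i))"
proof -
  have "ipow p (\<lambda>x. \<Sum>i\<in>I. c i * indicator (S i) x) = (\<integral>x. (\<Sum>i\<in>I. cmod (c i) powr p * indicator (S i) x) \<partial>M01)"
    unfolding ipow_def
    by (intro Bochner_Integration.integral_cong refl disj_sum[OF I dj]) simp_all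
  also have "\<dots> = (\<Sum>i\<in>I. cmod (c i) powr p * measure M01 (S i))"
    using I S by (rule integral_indsum_real)
  finally show ?thesis .
qed

definition dnorm :: "real \<Rightarrow> nat \<Rightarrow> (nat \<Rightarrow> complex) \<Rightarrow> real" where
  "dnorm p K d = ((1 / real K) * (\<Sum>l<K. cmod (d l) powr p)) powr (1/p)"

definition dmean :: "nat \<Rightarrow> (nat \<Rightarrow> complex) \<Rightarrow> complex" where
  "dmean K d = (1 / of_nat K) * (\<Sum>l<K. d l)"

context
  fixes p :: real and T :: "(real \<Rightarrow> complex) \<Rightarrow> (real \<Rightarrow> complex)"
  assumes p: "1 \<le> p" and bT: "bounded_op p T" and nT: "narrow p T"
begin

lemma simple_Lp:
  assumes v: "simple_function M01 v"
  shows "v \<in> Lp_space p"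
proof -
  have fin: "finite (v ` {0..1})" using simple_functionD(1)[OF v] by simp
  define B where "B = Max (cmod ` v ` {0..1})"
  show ?thesis
  proof (rule Lp_bounded[where B=B])
    show "v \<in> borel_measurable M01" using v by (rule borel_measurable_simple_function)
    fix x :: real assume "x \<in> {0..1}"
    then show "cmod (v x) \<le> B" unfolding B_def using fin by (intro Max_ge) auto
  qed (use p in auto)
qed

lemma core_eps:
  assumes v: "simple_function M01 v" and vn: "lp_norm p v = 1" and K: "K = 2 ^ k" and d: "0 < \<delta>"
  shows "\<exists>B. dnorm p K (\<lambda>l. d l - \<gamma> * dmean K d) \<le>
     op_norm p (op_diff idop T) * dnorm p K d + cmod (dmean K d) * lp_norm p (\<lambda>x. \<gamma> * v x - T v x) + \<delta> * B
     \<and> B = (\<Sum>a\<in>v ` {0..1}. \<Sum>l<K. cmod (a * d l))"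
proof -
  have p0: "0 < p" using p by simp
  have Kpos: "K > 0" using K by simp
  define R where "R = v ` {0..1}"
  define A where "A a = v -` {a} \<inter> {0..1}" for a
  have finR: "finite R" unfolding R_def using simple_functionD(1)[OF v] by simp
  have As: "A a \<in> sets M01" for a unfolding A_def using simple_functionD(2)[OF v, of "{a}"] by simp
  have Adj: "a \<noteq> a' \<Longrightarrow> A a \<inter> A a' = {}" for a a' unfolding A_def by auto
  have inA: "x \<in> {0..1} \<Longrightarrow> x \<in> A (v x)" for x unfolding A_def by auto
  have vR: "x \<in> {0..1} \<Longrightarrow> v x \<in> R" for x unfolding R_def by auto
  have vL: "v \<in> Lp_space p" by (rule simple_Lp[OF v])
  have "\<forall>a. \<exists>Q. a \<in> R \<longrightarrow> good p T (A a) K Q \<delta>"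
    using dyadic[OF p bT nT As d] K by blast
  from choice[OF this] obtain Q where Q0: "\<forall>a. a \<in> R \<longrightarrow> good p T (A a) K (Q a) \<delta>" ..
  have Qg: "\<And>a l. a \<in> R \<Longrightarrow> l < K \<Longrightarrow> Q a l \<in> sets M01 \<and> Q a l \<subseteq> A a \<and> measure M01 (Q a l) = measure M01 (A a) / K \<and>
       lp_norm p (\<lambda>x. T (indicator (Q a l)) x - (1 / of_nat K) * T (indicator (A a)) x) \<le> \<delta>"
    using Q0 unfolding good_def by blast
  have Qd: "\<And>a l l'. a \<in> R \<Longrightarrow> l < K \<Longrightarrow> l' < K \<Longrightarrow> l \<noteq> l' \<Longrightarrow> Q a l \<inter> Q a l' = {}"
    using Q0 unfolding good_def by blast
  have QU: "\<And>a. a \<in> R \<Longrightarrow> (\<Union>l<K. Q a l) = A a"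
    using Q0 unfolding good_def by blast
  define I where "I = R \<times> {..<K}"
  define S where "S i = Q (fst i) (snd i)" for i
  have finI: "finite I" unfolding I_def using finR by simp
  have SI: "i \<in> I \<Longrightarrow> S i \<in> sets M01" for i unfolding I_def S_def using Qg by auto
  have Sdj: "i \<in> I \<Longrightarrow> j \<in> I \<Longrightarrow> i \<noteq> j \<Longrightarrow> S i \<inter> S j = {}" for i j
  proof -
    assume i: "i \<in> I" and j: "j \<in> I" and ne: "i \<noteq> j"
    show ?thesis
    proof (cases "fst i = fst j")
      case True
      then have "snd i \<noteq> snd j" using ne by (metis prod.expand)
      then show ?thesis using Qd[of "fst i" "snd i" "snd j"] i j True unfolding I_def S_def by auto
    next
      case False
      have "S i \<subseteq> A (fst i)" "S j \<subseteq> A (fst j)"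
        using Qg[of "fst i" "snd i"] Qg[of "fst j" "snd j"] i j unfolding I_def S_def by (auto simp: mem_Times_iff)
      then show ?thesis using Adj[OF False] by blast
    qed
  qed
  have Smeas: "i \<in> I \<Longrightarrow> measure M01 (S i) = measure M01 (A (fst i)) / K" for i
    unfolding I_def S_def using Qg by auto
  have cover: "x \<in> {0..1} \<Longrightarrow> \<exists>l<K. x \<in> S (v x, l)" for x
    using QU[OF vR] inA unfolding S_def by fastforce
  have sumI: "(\<Sum>i\<in>I. h i) = (\<Sum>a\<in>R. \<Sum>l<K. h (a, l))" for h :: "complex \<times> nat \<Rightarrow> 'z::comm_monoid_add"
    unfolding I_def by (simp add: sum.cartesian_product)
  have v_rep: "v x = (\<Sum>i\<in>I. fst i * indicator (S i) x)" if x: "x \<in> {0..1}" for x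
  proof -
    obtain l where l: "l < K" "x \<in> S (v x, l)" using cover[OF x] by blast
    have "(v x, l) \<in> I" unfolding I_def using vR[OF x] l by simp
    from sum_ind_single[where I=I and S=S and i="(v x, l)" and x=x and c=fst, OF finI Sdj this l(2)]
    show ?thesis by simp
  qed
  have v_rep2: "v x = (\<Sum>a\<in>R. a * indicator (A a) x)" if x: "x \<in> {0..1}" for x
    using sum_ind_single[where I=R and S=A and i="v x" and x=x and c="\<lambda>a. a", OF finR _ vR[OF x] inA[OF x]] Adj by simp
  have "ipow p v = ipow p (\<lambda>x. \<Sum>i\<in>I. fst i * indicator (S i) x)"
    by (rule ipow_cong_space) (rule v_rep)
  also have "\<dots> = (\<Sum>i\<in>I. cmod (fst i) powr p * measure M01 (S i))"
    by (rule ipow_indsum[OF finI Sdj SI p0])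
  also have "\<dots> = (\<Sum>a\<in>R. cmod a powr p * measure M01 (A a))"
    unfolding sumI using Kpos by (intro sum.cong refl) (simp add: Smeas I_def)
  finally have vsum: "(\<Sum>a\<in>R. cmod a powr p * measure M01 (A a)) = 1"
    using vn p0 ipow_lp_norm[OF p0, of v] by simp
  have ipow_gen: "ipow p (\<lambda>x. \<Sum>i\<in>I. (fst i * e (snd i)) * indicator (S i) x)
      = (1 / real K) * (\<Sum>l<K. cmod (e l) powr p)" for e
  proof -
    have "ipow p (\<lambda>x. \<Sum>i\<in>I. (fst i * e (snd i)) * indicator (S i) x)
        = (\<Sum>i\<in>I. cmod (fst i * e (snd i)) powr p * measure M01 (S i))"
      by (rule ipow_indsum[OF finI Sdj SI p0])
    also have "\<dots> = (\<Sum>a\<in>R. \<Sum>l<K. (cmod a powr p * measure M01 (A a)) * ((1 / real K) * cmod (e l) powr p))"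
      unfolding sumI by (intro sum.cong refl) (simp add: Smeas I_def norm_mult powr_mult)
    also have "\<dots> = (\<Sum>a\<in>R. cmod a powr p * measure M01 (A a)) * (\<Sum>l<K. (1 / real K) * cmod (e l) powr p)"
      by (rule sum_product[symmetric])
    also have "\<dots> = (\<Sum>a\<in>R. cmod a powr p * measure M01 (A a)) * ((1 / real K) * (\<Sum>l<K. cmod (e l) powr p))"
      by (simp add: sum_distrib_left)
    finally show ?thesis using vsum by simp
  qed
  define m where "m = dmean K d"
  define w where "w x = (\<Sum>i\<in>I. (fst i * d (snd i)) * indicator (S i) x)" for x
  have wL: "w \<in> Lp_space p" unfolding w_def
    using finI SI p0 by (intro Lp_sum Lp_scale Lp_indicator) auto
  have wn: "lp_norm p w = dnorm p K d"
    unfolding lp_norm_ipow dnorm_def w_def ipow_gen ..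
  have en: "lp_norm p (\<lambda>x. w x - \<gamma> * m * v x) = dnorm p K (\<lambda>l. d l - \<gamma> * m)"
  proof -
    have "ipow p (\<lambda>x. w x - \<gamma> * m * v x) = ipow p (\<lambda>x. \<Sum>i\<in>I. (fst i * (d (snd i) - \<gamma> * m)) * indicator (S i) x)"
    proof (rule ipow_cong_space)
      fix x :: real assume x: "x \<in> {0..1}"
      show "w x - \<gamma> * m * v x = (\<Sum>i\<in>I. (fst i * (d (snd i) - \<gamma> * m)) * indicator (S i) x)"
        unfolding w_def v_rep[OF x] by (simp add: sum_distrib_left sum_subtractf[symmetric] algebra_simps)
    qed
    then show ?thesis unfolding lp_norm_ipow dnorm_def using ipow_gen[of "\<lambda>l. d l - \<gamma> * m"] by simp
  qed
  define D where "D i x = T (indicator (S i)) x - (1 / of_nat K) * T (indicator (A (fst i))) x" for i x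
  have DL: "i \<in> I \<Longrightarrow> D i \<in> Lp_space p" for i
    unfolding D_def using SI As p0 by (intro Lp_diff Lp_scale T_ind_Lp[OF p bT nT]) auto
  have Dn: "i \<in> I \<Longrightarrow> lp_norm p (D i) \<le> \<delta>" for i
    unfolding D_def S_def I_def using Qg by (auto simp: mem_Times_iff)
  have Tw: "AE x in M01. T w x = (\<Sum>i\<in>I. (fst i * d (snd i)) * T (indicator (S i)) x)"
    unfolding w_def using finI SI p0 by (intro T_sum[OF p bT] Lp_indicator) auto
  have Tv1: "AE x in M01. T v x = T (\<lambda>y. \<Sum>a\<in>R. a * indicator (A a) y) x"
    using finR As p0 v_rep2 by (intro T_cong[OF p bT] vL Lp_sum Lp_scale Lp_indicator) auto
  have Tv2: "AE x in M01. T (\<lambda>y. \<Sum>a\<in>R. a * indicator (A a) y) x = (\<Sum>a\<in>R. a * T (indicator (A a)) x)"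
    using finR As p0 by (intro T_sum[OF p bT] Lp_indicator) auto
  have alg: "(\<Sum>i\<in>I. (fst i * d (snd i)) * X (S i)) - m * (\<Sum>a\<in>R. a * Y a)
      = (\<Sum>i\<in>I. (fst i * d (snd i)) * (X (S i) - (1 / of_nat K) * Y (fst i)))" for X :: "real set \<Rightarrow> complex" and Y
  proof -
    have "m * (\<Sum>a\<in>R. a * Y a) = (\<Sum>l<K. (1 / of_nat K) * d l) * (\<Sum>a\<in>R. a * Y a)"
      unfolding m_def dmean_def by (simp add: sum_distrib_left)
    also have "\<dots> = (\<Sum>l<K. \<Sum>a\<in>R. ((1 / of_nat K) * d l) * (a * Y a))"
      by (rule sum_product)
    also have "\<dots> = (\<Sum>a\<in>R. \<Sum>l<K. ((1 / of_nat K) * d l) * (a * Y a))"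
      by (rule sum.swap)
    also have "\<dots> = (\<Sum>a\<in>R. \<Sum>l<K. (a * d l) * ((1 / of_nat K) * Y a))"
      by (simp add: algebra_simps)
    finally have "m * (\<Sum>a\<in>R. a * Y a) = (\<Sum>a\<in>R. \<Sum>l<K. (a * d l) * ((1 / of_nat K) * Y a))" .
    then show ?thesis unfolding sumI by (simp add: sum_subtractf[symmetric] algebra_simps)
  qed
  have aeD: "AE x in M01. T w x - m * T v x = (\<Sum>i\<in>I. (fst i * d (snd i)) * D i x)"
    using Tw Tv1 Tv2 unfolding D_def
  proof eventually_elim
    case (elim x)
    show ?case using alg[of "\<lambda>S. T (indicator S) x" "\<lambda>a. T (indicator (A a)) x"] elim by simp
  qed
  have TwL: "T w \<in> Lp_space p" using T_Lp[OF p bT] wL by blast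
  have TvL: "T v \<in> Lp_space p" using T_Lp[OF p bT] vL by blast
  have sumDL: "(\<lambda>x. \<Sum>i\<in>I. (fst i * d (snd i)) * D i x) \<in> Lp_space p"
    using finI DL p0 by (intro Lp_sum Lp_scale) auto
  have n2: "lp_norm p (\<lambda>x. T w x - m * T v x) \<le> \<delta> * (\<Sum>a\<in>R. \<Sum>l<K. cmod (a * d l))"
  proof -
    have "lp_norm p (\<lambda>x. T w x - m * T v x) = lp_norm p (\<lambda>x. \<Sum>i\<in>I. (fst i * d (snd i)) * D i x)"
      using aeD TwL TvL sumDL p0 by (intro lp_norm_cong) (auto intro!: Lp_measurable Lp_diff Lp_scale)
    also have "\<dots> \<le> (\<Sum>i\<in>I. lp_norm p (\<lambda>x. (fst i * d (snd i)) * D i x))"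
      using finI DL p0 p by (intro minkowski_sum Lp_scale) auto
    also have "\<dots> = (\<Sum>i\<in>I. cmod (fst i * d (snd i)) * lp_norm p (D i))"
      using p0 by (intro sum.cong refl lp_norm_scale)
    also have "\<dots> \<le> (\<Sum>i\<in>I. cmod (fst i * d (snd i)) * \<delta>)"
      using Dn by (intro sum_mono mult_left_mono) auto
    also have "\<dots> = \<delta> * (\<Sum>a\<in>R. \<Sum>l<K. cmod (a * d l))"
      unfolding sumI by (simp add: sum_distrib_left algebra_simps)
    finally show ?thesis .
  qed
  have n1: "lp_norm p (\<lambda>x. w x - T w x) \<le> op_norm p (op_diff idop T) * dnorm p K d"
    using IT_norm_le[OF p bT wL] wn by simp
  have n3: "lp_norm p (\<lambda>x. T v x - \<gamma> * v x) = lp_norm p (\<lambda>x. \<gamma> * v x - T v x)"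
    by (rule lp_norm_commute)
  have L1: "(\<lambda>x. w x - T w x) \<in> Lp_space p" using wL TwL p0 by (intro Lp_diff)
  have L2: "(\<lambda>x. T w x - m * T v x) \<in> Lp_space p" using TwL TvL p0 by (intro Lp_diff Lp_scale)
  have L3: "(\<lambda>x. T v x - \<gamma> * v x) \<in> Lp_space p" using vL TvL p0 by (intro Lp_diff Lp_scale)
  have "lp_norm p (\<lambda>x. w x - \<gamma> * m * v x)
      \<le> lp_norm p (\<lambda>x. w x - T w x) + lp_norm p (\<lambda>x. (T w x - m * T v x) + m * (T v x - \<gamma> * v x))"
  proof -
    have L23: "(\<lambda>x. (T w x - m * T v x) + m * (T v x - \<gamma> * v x)) \<in> Lp_space p"
      by (rule Lp_add[OF L2 Lp_scale[OF L3 p0] p0])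
    have "lp_norm p (\<lambda>x. w x - \<gamma> * m * v x)
      \<le> lp_norm p (\<lambda>x. w x - T w x) + cmod 1 * lp_norm p (\<lambda>x. (T w x - m * T v x) + m * (T v x - \<gamma> * v x))"
      by (rule norm_comb[OF p bT nT L1 L23]) (simp add: algebra_simps)
    then show ?thesis by simp
  qed
  also have "lp_norm p (\<lambda>x. (T w x - m * T v x) + m * (T v x - \<gamma> * v x))
      \<le> lp_norm p (\<lambda>x. T w x - m * T v x) + cmod m * lp_norm p (\<lambda>x. T v x - \<gamma> * v x)"
    by (rule norm_comb[OF p bT nT L2 L3]) simp
  finally have "dnorm p K (\<lambda>l. d l - \<gamma> * m) \<le> op_norm p (op_diff idop T) * dnorm p K d
      + \<delta> * (\<Sum>a\<in>R. \<Sum>l<K. cmod (a * d l)) + cmod m * lp_norm p (\<lambda>x. \<gamma> * v x - T v x)"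
    using n1 n2 n3 en by simp
  then show ?thesis unfolding m_def R_def by (intro exI[of _ "\<Sum>a\<in>v ` {0..1}. \<Sum>l<K. cmod (a * d l)"]) simp
qed

end

lemma convex_powr0: "1 \<le> p \<Longrightarrow> convex_on {0..} (\<lambda>x::real. x powr p)"
proof (rule convex_onI)
  fix t x y :: real assume p: "1 \<le> p" and t: "0 < t" "t < 1" and x: "x \<in> {0..}" and y: "y \<in> {0..}"
  show "((1 - t) *\<^sub>R x + t *\<^sub>R y) powr p \<le> (1 - t) * x powr p + t * y powr p"
    using cvx2[of y x t p] x y t p by (simp add: add_ac)
qed (simp add: convex_real_interval)

lemma dmean_le_dnorm:
  assumes p: "1 \<le> p" and K: "K > 0"
  shows "cmod (dmean K d) \<le> dnorm p K d"
proof -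
  define \<mu> where "\<mu> = (\<Sum>l<K. (1 / real K) *\<^sub>R cmod (d l))"
  have "cmod (dmean K d) \<le> (1 / real K) * (\<Sum>l<K. cmod (d l))"
    unfolding dmean_def by (simp add: norm_mult norm_divide norm_sum sum_norm_le divide_right_mono)
  also have "\<dots> = \<mu>" unfolding \<mu>_def by (simp add: sum_distrib_left)
  finally have 1: "cmod (dmean K d) \<le> \<mu>" .
  have "\<mu> powr p \<le> (\<Sum>l<K. (1 / real K) * cmod (d l) powr p)"
    unfolding \<mu>_def using K
    by (intro convex_on_sum[OF _ _ convex_powr0[OF p]]) auto
  also have "\<dots> = (1 / real K) * (\<Sum>l<K. cmod (d l) powr p)" by (simp add: sum_distrib_left)
  finally have 2: "\<mu> powr p \<le> (1 / real K) * (\<Sum>l<K. cmod (d l) powr p)" .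
  have mu0: "0 \<le> \<mu>" unfolding \<mu>_def by (intro sum_nonneg) auto
  have "\<mu> = (\<mu> powr p) powr (1/p)" using mu0 p by (simp add: powr_powr)
  also have "\<dots> \<le> dnorm p K d" unfolding dnorm_def using 2 p by (intro powr_mono2) auto
  finally show ?thesis using 1 by simp
qed

lemma fiber_exists:
  assumes "finite R"
  shows "\<exists>\<sigma>. (\<forall>l < (\<Sum>a\<in>R. N a). \<sigma> l \<in> R) \<and> (\<forall>a\<in>R. card {l. l < (\<Sum>a\<in>R. N a) \<and> \<sigma> l = a} = N a)"
  using assms
proof (induction R rule: finite_induct)
  case empty then show ?case by simp
next
  case (insert b R)
  then obtain \<sigma> where s1: "\<forall>l < (\<Sum>a\<in>R. N a). \<sigma> l \<in> R" and s2: "\<forall>a\<in>R. card {l. l < (\<Sum>a\<in>R. N a) \<and> \<sigma> l = a} = N a"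
    by blast
  define S where "S = (\<Sum>a\<in>R. N a)"
  define \<tau> where "\<tau> l = (if l < S then \<sigma> l else b)" for l
  have tot: "(\<Sum>a\<in>insert b R. N a) = S + N b" using insert unfolding S_def by simp
  show ?case
  proof (intro exI[of _ \<tau>] conjI ballI allI impI)
    fix l assume "l < (\<Sum>a\<in>insert b R. N a)"
    then show "\<tau> l \<in> insert b R" using s1 unfolding \<tau>_def S_def by auto
  next
    fix a assume a: "a \<in> insert b R"
    show "card {l. l < (\<Sum>a\<in>insert b R. N a) \<and> \<tau> l = a} = N a"
    proof (cases "a = b")
      case True
      have tb: "\<tau> l = b \<longleftrightarrow> \<not> l < S" for l
        using s1 insert(2) unfolding \<tau>_def S_def by auto
      have "{l. l < (\<Sum>a\<in>insert b R. N a) \<and> \<tau> l = a} = {S..<S + N b}"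
      proof (rule set_eqI)
        fix l
        show "l \<in> {l. l < (\<Sum>a\<in>insert b R. N a) \<and> \<tau> l = a} \<longleftrightarrow> l \<in> {S..<S + N b}"
          unfolding tot mem_Collect_eq atLeastLessThan_iff True tb[of l] by linarith
      qed
      then show ?thesis using True by simp
    next
      case False
      then have aR: "a \<in> R" using a by simp
      have "{l. l < (\<Sum>a\<in>insert b R. N a) \<and> \<tau> l = a} = {l. l < S \<and> \<sigma> l = a}"
        unfolding tot \<tau>_def using False by auto
      then show ?thesis using s2 aR unfolding S_def by simp
    qed
  qed
qed

lemma sum_fiber:
  fixes h :: "'a \<Rightarrow> 'b::comm_ring_1" and K :: nat
  assumes R: "finite R" and s1: "\<forall>l < K. \<sigma> l \<in> R" and s2: "\<forall>a\<in>R. card {l. l < K \<and> \<sigma> l = a} = N a"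
  shows "(\<Sum>l<K. h (\<sigma> l)) = (\<Sum>a\<in>R. of_nat (N a) * h a)"
proof -
  have "(\<Sum>l<K. h (\<sigma> l)) = (\<Sum>a\<in>R. \<Sum>l\<in>{x \<in> {..<K}. \<sigma> x = a}. h (\<sigma> l))"
    using R s1 by (intro sum.group[symmetric]) auto
  also have "\<dots> = (\<Sum>a\<in>R. of_nat (N a) * h a)"
  proof (intro sum.cong refl)
    fix a assume a: "a \<in> R"
    have "(\<Sum>l\<in>{x \<in> {..<K}. \<sigma> x = a}. h (\<sigma> l)) = (\<Sum>l\<in>{x \<in> {..<K}. \<sigma> x = a}. h a)"
      by (intro sum.cong) auto
    also have "\<dots> = of_nat (card {x \<in> {..<K}. \<sigma> x = a}) * h a" by simp
    also have "{x \<in> {..<K}. \<sigma> x = a} = {l. l < K \<and> \<sigma> l = a}" by auto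
    finally show "(\<Sum>l\<in>{x \<in> {..<K}. \<sigma> x = a}. h (\<sigma> l)) = of_nat (N a) * h a" using s2 a by simp
  qed
  finally show ?thesis .
qed

definition WM :: "complex set \<Rightarrow> (complex \<Rightarrow> real) \<Rightarrow> complex" where
  "WM R w = (\<Sum>a\<in>R. of_real (w a) * a)"
definition WN :: "real \<Rightarrow> complex set \<Rightarrow> (complex \<Rightarrow> real) \<Rightarrow> real" where
  "WN q R w = (\<Sum>a\<in>R. w a * cmod a powr q) powr (1/q)"
definition WF :: "real \<Rightarrow> complex \<Rightarrow> complex set \<Rightarrow> (complex \<Rightarrow> real) \<Rightarrow> real" where
  "WF q \<gamma> R w = (\<Sum>a\<in>R. w a * cmod (a - \<gamma> * WM R w) powr q) powr (1/q)"

context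
  fixes p :: real and T :: "(real \<Rightarrow> complex) \<Rightarrow> (real \<Rightarrow> complex)"
  assumes p: "1 \<le> p" and bT: "bounded_op p T" and nT: "narrow p T"
begin

lemma core:
  assumes v: "simple_function M01 v" and vn: "lp_norm p v = 1" and K: "K = 2 ^ k"
  shows "dnorm p K (\<lambda>l. d l - \<gamma> * dmean K d) \<le>
     (op_norm p (op_diff idop T) + lp_norm p (\<lambda>x. \<gamma> * v x - T v x)) * dnorm p K d"
proof -
  define B where "B = (\<Sum>a\<in>v ` {0..1}. \<Sum>l<K. cmod (a * d l))"
  have B0: "0 \<le> B" unfolding B_def by (intro sum_nonneg) auto
  have 1: "dnorm p K (\<lambda>l. d l - \<gamma> * dmean K d) \<le>
     op_norm p (op_diff idop T) * dnorm p K d + cmod (dmean K d) * lp_norm p (\<lambda>x. \<gamma> * v x - T v x)"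
  proof (rule field_le_epsilon)
    fix e :: real assume e: "0 < e"
    define \<delta> where "\<delta> = e / (B + 1)"
    have d: "0 < \<delta>" unfolding \<delta>_def using e B0 by simp
    have "\<delta> * B \<le> e" unfolding \<delta>_def using e B0 by (simp add: field_simps)
    with core_eps[OF p bT nT v vn K d, of d \<gamma>] show "dnorm p K (\<lambda>l. d l - \<gamma> * dmean K d) \<le>
     op_norm p (op_diff idop T) * dnorm p K d + cmod (dmean K d) * lp_norm p (\<lambda>x. \<gamma> * v x - T v x) + e"
      unfolding B_def by auto
  qed
  have "cmod (dmean K d) * lp_norm p (\<lambda>x. \<gamma> * v x - T v x) \<le> dnorm p K d * lp_norm p (\<lambda>x. \<gamma> * v x - T v x)"
    using dmean_le_dnorm[OF p, of K d] K by (intro mult_right_mono) (auto simp: lp_norm_nonneg)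
  with 1 show ?thesis by (simp add: algebra_simps)
qed

lemma disc_dyadic:
  assumes v: "simple_function M01 v" and vn: "lp_norm p v = 1"
    and R: "finite R" and N: "(\<Sum>a\<in>R. N a) = (2::nat) ^ k"
  shows "WF p \<gamma> R (\<lambda>a. real (N a) / 2 ^ k) \<le>
     (op_norm p (op_diff idop T) + lp_norm p (\<lambda>x. \<gamma> * v x - T v x)) * WN p R (\<lambda>a. real (N a) / 2 ^ k)"
proof -
  define K :: nat where "K = 2 ^ k"
  obtain \<sigma> where s1: "\<forall>l < K. \<sigma> l \<in> R" and s2: "\<forall>a\<in>R. card {l. l < K \<and> \<sigma> l = a} = N a"
    using fiber_exists[OF R, of N] unfolding N K_def by blast
  have Kr: "real K = 2 ^ k" unfolding K_def by simp
  have m: "dmean K \<sigma> = WM R (\<lambda>a. real (N a) / 2 ^ k)"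
  proof -
    have "dmean K \<sigma> = (1 / of_nat K) * (\<Sum>a\<in>R. of_nat (N a) * a)"
      unfolding dmean_def using sum_fiber[OF R s1 s2, of "\<lambda>a. a"] by simp
    also have "\<dots> = WM R (\<lambda>a. real (N a) / 2 ^ k)"
      unfolding WM_def K_def by (simp add: sum_distrib_left algebra_simps)
    finally show ?thesis .
  qed
  have gen: "(1 / real K) * (\<Sum>l<K. h (\<sigma> l)) = (\<Sum>a\<in>R. real (N a) / 2 ^ k * h a)" for h :: "complex \<Rightarrow> real"
    using sum_fiber[OF R s1 s2, of h] unfolding Kr by (simp add: sum_distrib_left)
  have "dnorm p K (\<lambda>l. \<sigma> l - \<gamma> * dmean K \<sigma>) \<le>
     (op_norm p (op_diff idop T) + lp_norm p (\<lambda>x. \<gamma> * v x - T v x)) * dnorm p K \<sigma>"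
    by (rule core[OF v vn K_def])
  moreover have "dnorm p K \<sigma> = WN p R (\<lambda>a. real (N a) / 2 ^ k)"
    unfolding dnorm_def WN_def gen[of "\<lambda>a. cmod a powr p"] ..
  moreover have "dnorm p K (\<lambda>l. \<sigma> l - \<gamma> * dmean K \<sigma>) = WF p \<gamma> R (\<lambda>a. real (N a) / 2 ^ k)"
    unfolding dnorm_def WF_def m using gen[of "\<lambda>a. cmod (a - \<gamma> * WM R (\<lambda>a. real (N a) / 2 ^ k)) powr p"] by simp
  ultimately show ?thesis by simp
qed

end

lemma tendsto_powr_nn:
  fixes f :: "'a \<Rightarrow> real"
  assumes "(f \<longlongrightarrow> a) F" "\<And>x. 0 \<le> f x" "0 < b"
  shows "((\<lambda>x. f x powr b) \<longlongrightarrow> a powr b) F"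
  using assms by (intro tendsto_powr') auto

lemma floor_approx:
  assumes "0 \<le> r"
  shows "(\<lambda>k. real (nat \<lfloor>2 ^ k * r\<rfloor>) / 2 ^ k) \<longlonglongrightarrow> r"
proof (rule tendsto_sandwich[where f="\<lambda>k. r - inverse (2 ^ k)" and h="\<lambda>k. r"])
  show "(\<lambda>k. r - inverse (2 ^ k)) \<longlonglongrightarrow> r"
    using tendsto_diff[OF tendsto_const LIMSEQ_inverse_realpow_zero[of 2]] by simp
  have fl: "real (nat \<lfloor>2 ^ k * r\<rfloor>) = of_int \<lfloor>2 ^ k * r\<rfloor>" for k :: nat
    using assms by simp
  show "\<forall>\<^sub>F k in sequentially. r - inverse (2 ^ k) \<le> real (nat \<lfloor>2 ^ k * r\<rfloor>) / 2 ^ k"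
  proof (intro always_eventually allI)
    fix k :: nat
    have "r - inverse (2 ^ k) = (2 ^ k * r - 1) / 2 ^ k" by (simp add: field_simps)
    also have "\<dots> \<le> of_int \<lfloor>2 ^ k * r\<rfloor> / 2 ^ k" by (intro divide_right_mono) (linarith, simp)
    finally show "r - inverse (2 ^ k) \<le> real (nat \<lfloor>2 ^ k * r\<rfloor>) / 2 ^ k"
      unfolding fl .
  qed
  show "\<forall>\<^sub>F k in sequentially. real (nat \<lfloor>2 ^ k * r\<rfloor>) / 2 ^ k \<le> r"
  proof (intro always_eventually allI)
    fix k :: nat
    have "of_int \<lfloor>2 ^ k * r\<rfloor> / 2 ^ k \<le> (2 ^ k * r) / 2 ^ k" by (intro divide_right_mono) (linarith, simp)
    then show "real (nat \<lfloor>2 ^ k * r\<rfloor>) / 2 ^ k \<le> r"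
      unfolding fl by simp
  qed
qed simp

context
  fixes p :: real and T :: "(real \<Rightarrow> complex) \<Rightarrow> (real \<Rightarrow> complex)"
  assumes p: "1 \<le> p" and bT: "bounded_op p T" and nT: "narrow p T"
begin

lemma disc_general:
  assumes v: "simple_function M01 v" and vn: "lp_norm p v = 1"
    and R: "finite R" and a0: "a0 \<in> R" and r0: "\<And>a. a \<in> R \<Longrightarrow> 0 \<le> r a" and r1: "(\<Sum>a\<in>R. r a) = 1"
  shows "WF p \<gamma> R r \<le> (op_norm p (op_diff idop T) + lp_norm p (\<lambda>x. \<gamma> * v x - T v x)) * WN p R r"
proof -
  define L where "L = op_norm p (op_diff idop T) + lp_norm p (\<lambda>x. \<gamma> * v x - T v x)"
  define R' where "R' = R - {a0}"
  have R': "finite R'" "R = insert a0 R'" "a0 \<notin> R'" unfolding R'_def using R a0 by auto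
  define F where "F k a = nat \<lfloor>2 ^ k * r a\<rfloor>" for k :: nat and a
  define N where "N k a = (if a = a0 then 2 ^ k - (\<Sum>b\<in>R'. F k b) else F k a)" for k :: nat and a
  have Fle: "(\<Sum>b\<in>R'. F k b) \<le> 2 ^ k" for k
  proof -
    have "real (\<Sum>b\<in>R'. F k b) = (\<Sum>b\<in>R'. real (F k b))" by simp
    also have "\<dots> \<le> (\<Sum>b\<in>R'. 2 ^ k * r b)"
    proof (intro sum_mono)
      fix b assume "b \<in> R'"
      then have "0 \<le> 2 ^ k * r b" using r0 R'(2) by simp
      then have "real (F k b) = of_int \<lfloor>2 ^ k * r b\<rfloor>" unfolding F_def by simp
      then show "real (F k b) \<le> 2 ^ k * r b" by linarith
    qed
    also have "\<dots> \<le> (\<Sum>b\<in>R. 2 ^ k * r b)"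
      using R'(1,2) r0 R by (intro sum_mono2) auto
    also have "\<dots> = 2 ^ k" using r1 by (simp add: sum_distrib_left[symmetric])
    finally have "real (\<Sum>b\<in>R'. F k b) \<le> real ((2::nat) ^ k)" by simp
    then show ?thesis by linarith
  qed
  have Nsum: "(\<Sum>a\<in>R. N k a) = 2 ^ k" for k
  proof -
    have "(\<Sum>a\<in>R. N k a) = N k a0 + (\<Sum>a\<in>R'. N k a)" using R' by simp
    also have "(\<Sum>a\<in>R'. N k a) = (\<Sum>a\<in>R'. F k a)" unfolding N_def using R' by (intro sum.cong) auto
    finally show ?thesis unfolding N_def using Fle[of k] by simp
  qed
  define q where "q k a = real (N k a) / 2 ^ k" for k :: nat and a
  have ineq: "WF p \<gamma> R (q k) \<le> L * WN p R (q k)" for k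
    unfolding q_def L_def by (rule disc_dyadic[OF p bT nT v vn R Nsum])
  have qF: "a \<in> R' \<Longrightarrow> (\<lambda>k. q k a) \<longlonglongrightarrow> r a" for a
  proof -
    assume a: "a \<in> R'"
    then have ne: "a \<noteq> a0" and aR: "a \<in> R" using R' by auto
    have "(\<lambda>k. q k a) = (\<lambda>k. real (nat \<lfloor>2 ^ k * r a\<rfloor>) / 2 ^ k)"
      unfolding q_def N_def F_def using ne by simp
    then show ?thesis using floor_approx[OF r0[OF aR]] by simp
  qed
  have qa0: "(\<lambda>k. q k a0) \<longlonglongrightarrow> r a0"
  proof -
    have "q k a0 = 1 - (\<Sum>b\<in>R'. q k b)" for k
    proof -
      have "q k a0 = real (2 ^ k - (\<Sum>b\<in>R'. F k b)) / 2 ^ k" unfolding q_def N_def by simp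
      also have "\<dots> = (2 ^ k - (\<Sum>b\<in>R'. real (F k b))) / 2 ^ k" using Fle[of k] by (simp add: of_nat_diff)
      also have "(\<Sum>b\<in>R'. q k b) = (\<Sum>b\<in>R'. real (F k b)) / 2 ^ k"
        unfolding q_def N_def sum_divide_distrib using R'(3) by (intro sum.cong) auto
      then have "(2 ^ k - (\<Sum>b\<in>R'. real (F k b))) / 2 ^ k = 1 - (\<Sum>b\<in>R'. q k b)"
        by (simp add: field_simps)
      finally show ?thesis .
    qed
    moreover have "(\<lambda>k. 1 - (\<Sum>b\<in>R'. q k b)) \<longlonglongrightarrow> 1 - (\<Sum>b\<in>R'. r b)"
      by (intro tendsto_intros qF)
    moreover have "1 - (\<Sum>b\<in>R'. r b) = r a0" using r1 R' by simp
    ultimately show ?thesis by simp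
  qed
  have qlim: "a \<in> R \<Longrightarrow> (\<lambda>k. q k a) \<longlonglongrightarrow> r a" for a
    using qF qa0 R' by auto
  have q0: "0 \<le> q k a" for k a unfolding q_def by simp
  have WMlim: "(\<lambda>k. WM R (q k)) \<longlonglongrightarrow> WM R r"
    unfolding WM_def
  proof (rule tendsto_sum)
    fix a assume "a \<in> R"
    then show "(\<lambda>k. complex_of_real (q k a) * a) \<longlonglongrightarrow> complex_of_real (r a) * a"
      by (intro tendsto_mult tendsto_of_real qlim tendsto_const)
  qed
  have "(\<lambda>k. WF p \<gamma> R (q k)) \<longlonglongrightarrow> WF p \<gamma> R r"
    unfolding WF_def using p
    by (intro tendsto_powr_nn tendsto_sum tendsto_mult qlim tendsto_norm tendsto_diff tendsto_const WMlim)
      (auto intro!: sum_nonneg mult_nonneg_nonneg q0)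
  moreover have "(\<lambda>k. L * WN p R (q k)) \<longlonglongrightarrow> L * WN p R r"
    unfolding WN_def using p
    by (intro tendsto_mult tendsto_const tendsto_powr_nn tendsto_sum qlim)
      (auto intro!: sum_nonneg mult_nonneg_nonneg q0)
  ultimately show ?thesis using ineq unfolding L_def by (intro LIMSEQ_le) auto
qed

end

lemma tendsto_by_bound:
  fixes x :: "nat \<Rightarrow> real"
  assumes "\<And>i. \<bar>x i - a\<bar> \<le> e i" "e \<longlonglongrightarrow> 0"
  shows "x \<longlonglongrightarrow> a"
proof (rule tendsto_sandwich[where f="\<lambda>i. a - e i" and h="\<lambda>i. a + e i"])
  show "\<forall>\<^sub>F n in sequentially. a - e n \<le> x n"
  proof (intro always_eventually allI)
    fix n show "a - e n \<le> x n" using assms(1)[of n] by (simp add: abs_le_iff)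
  qed
  show "\<forall>\<^sub>F n in sequentially. x n \<le> a + e n"
  proof (intro always_eventually allI)
    fix n show "x n \<le> a + e n" using assms(1)[of n] by (simp add: abs_le_iff)
  qed
  show "(\<lambda>i. a - e i) \<longlonglongrightarrow> a" using tendsto_diff[OF tendsto_const assms(2), of a] by simp
  show "(\<lambda>i. a + e i) \<longlonglongrightarrow> a" using tendsto_add[OF tendsto_const assms(2), of a] by simp
qed

lemma rev_tri:
  assumes f: "f \<in> Lp_space p" and g: "g \<in> Lp_space p" and p: "1 \<le> p"
  shows "\<bar>lp_norm p f - lp_norm p g\<bar> \<le> lp_norm p (\<lambda>x. f x - g x)"
proof -
  have p0: "0 < p" using p by simp
  have fg: "(\<lambda>x. f x - g x) \<in> Lp_space p" using f g p0 by (rule Lp_diff)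
  have gf: "(\<lambda>x. g x - f x) \<in> Lp_space p" using f g p0 by (intro Lp_diff)
  have "lp_norm p f \<le> lp_norm p (\<lambda>x. f x - g x) + lp_norm p g"
    using minkowski[OF fg g p] by simp
  moreover have "lp_norm p g \<le> lp_norm p (\<lambda>x. g x - f x) + lp_norm p f"
    using minkowski[OF gf f p] by simp
  ultimately show ?thesis using lp_norm_commute[of p g f] by linarith
qed

lemma approx_simple:
  assumes u: "u \<in> Lp_space p" and p: "1 \<le> p"
  shows "\<exists>s. (\<forall>i. simple_function M01 (s i)) \<and> (\<lambda>i. lp_norm p (\<lambda>x. s i x - u x)) \<longlonglongrightarrow> 0
     \<and> (\<lambda>i. \<integral>x. s i x \<partial>M01) \<longlonglongrightarrow> (\<integral>x. u x \<partial>M01)"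
proof -
  have p0: "0 < p" using p by simp
  have um: "u \<in> borel_measurable M01" using u by (rule Lp_measurable)
  obtain s where s1: "\<And>i. simple_function M01 (s i)"
    and s2: "\<And>x. x \<in> space M01 \<Longrightarrow> (\<lambda>i. s i x) \<longlonglongrightarrow> u x"
    and s3: "\<And>i x. x \<in> space M01 \<Longrightarrow> dist (s i x) 0 \<le> 2 * dist (u x) 0"
    using borel_measurable_implies_sequence_metric[OF um, of 0] by blast
  have sm: "\<And>i. s i \<in> borel_measurable M01" using s1 by (rule borel_measurable_simple_function)
  have ui: "integrable M01 u" by (rule Lp_integrable[OF u p])
  have "(\<lambda>i. ipow p (\<lambda>x. s i x - u x)) \<longlonglongrightarrow> (\<integral>x. 0 \<partial>M01)"
    unfolding ipow_def
  proof (rule integral_dominated_convergence[where w="\<lambda>x. 3 powr p * cmod (u x) powr p"])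
    show "(\<lambda>x. 0::real) \<in> borel_measurable M01" by simp
    show "\<And>i. (\<lambda>x. cmod (s i x - u x) powr p) \<in> borel_measurable M01" using sm um by measurable
    show "integrable M01 (\<lambda>x. 3 powr p * cmod (u x) powr p)" using Lp_integrable_pow[OF u] by simp
    show "AE x in M01. (\<lambda>i. cmod (s i x - u x) powr p) \<longlonglongrightarrow> 0"
    proof (rule AE_I2)
      fix x assume x: "x \<in> space M01"
      have "(\<lambda>i. cmod (s i x - u x)) \<longlonglongrightarrow> cmod (u x - u x)"
        by (intro tendsto_norm tendsto_diff s2[OF x] tendsto_const)
      then have "(\<lambda>i. cmod (s i x - u x) powr p) \<longlonglongrightarrow> 0 powr p"
        using p0 by (intro tendsto_powr_nn) auto
      then show "(\<lambda>i. cmod (s i x - u x) powr p) \<longlonglongrightarrow> 0" by simp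
    qed
    show "AE x in M01. norm (cmod (s i x - u x) powr p) \<le> 3 powr p * cmod (u x) powr p" for i
    proof (rule AE_I2)
      fix x assume x: "x \<in> space M01"
      have "cmod (s i x - u x) \<le> cmod (s i x) + cmod (u x)" by (rule norm_triangle_ineq4)
      also have "\<dots> \<le> 3 * cmod (u x)" using s3[OF x, of i] by (simp add: dist_norm)
      finally have "cmod (s i x - u x) powr p \<le> (3 * cmod (u x)) powr p" using p0 by (intro powr_mono2) auto
      then show "norm (cmod (s i x - u x) powr p) \<le> 3 powr p * cmod (u x) powr p"
        by (simp add: powr_mult)
    qed
  qed
  then have "(\<lambda>i. ipow p (\<lambda>x. s i x - u x) powr (1/p)) \<longlonglongrightarrow> 0 powr (1/p)"
    using p0 by (intro tendsto_powr_nn) (auto intro: ipow_nonneg)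
  then have L: "(\<lambda>i. lp_norm p (\<lambda>x. s i x - u x)) \<longlonglongrightarrow> 0"
    by (simp add: lp_norm_ipow)
  have I: "(\<lambda>i. \<integral>x. s i x \<partial>M01) \<longlonglongrightarrow> (\<integral>x. u x \<partial>M01)"
  proof (rule integral_dominated_convergence[where w="\<lambda>x. 2 * cmod (u x)"])
    show "u \<in> borel_measurable M01" by (rule um)
    show "\<And>i. s i \<in> borel_measurable M01" by (rule sm)
    show "integrable M01 (\<lambda>x. 2 * cmod (u x))" using ui by simp
    show "AE x in M01. (\<lambda>i. s i x) \<longlonglongrightarrow> u x" using s2 by (intro AE_I2) auto
    show "AE x in M01. norm (s i x) \<le> 2 * cmod (u x)" for i
      using s3 by (intro AE_I2) (auto simp: dist_norm)
  qed
  show ?thesis using s1 L I by blast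
qed

lemma simple_facts:
  assumes F: "simple_function M01 F"
    and R_def: "R = F ` {0..1}" and A_def: "A = (\<lambda>a. F -` {a} \<inter> {0..1::real})"
  shows "finite R" "R \<noteq> {}" "\<And>a. A a \<in> sets M01"
    "\<And>a b. a \<in> R \<Longrightarrow> b \<in> R \<Longrightarrow> a \<noteq> b \<Longrightarrow> A a \<inter> A b = {}"
    "\<And>x. x \<in> {0..1} \<Longrightarrow> (\<Sum>a\<in>R. h a * indicator (A a) x) = (h (F x) :: 'b::ring_1)"
    "(\<Sum>a\<in>R. measure M01 (A a)) = 1"
proof -
  show fR: "finite R" unfolding R_def using simple_functionD(1)[OF F] by simp
  show "R \<noteq> {}" unfolding R_def by auto
  show As: "\<And>a. A a \<in> sets M01" unfolding A_def using simple_functionD(2)[OF F] by simp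
  show dj: "\<And>a b. a \<in> R \<Longrightarrow> b \<in> R \<Longrightarrow> a \<noteq> b \<Longrightarrow> A a \<inter> A b = {}" unfolding A_def by auto
  show rep: "\<And>x. x \<in> {0..1} \<Longrightarrow> (\<Sum>a\<in>R. h a * indicator (A a) x) = (h (F x) :: 'b::ring_1)" for h
  proof -
    fix x :: real assume x: "x \<in> {0..1}"
    have "F x \<in> R" "x \<in> A (F x)" unfolding R_def A_def using x by auto
    from sum_ind_single[where I=R and S=A and c=h, OF fR dj this]
    show "(\<Sum>a\<in>R. h a * indicator (A a) x) = h (F x)" by simp
  qed
  have "(\<integral>x. (\<Sum>a\<in>R. 1 * indicator (A a) x) \<partial>M01) = (\<integral>x. (1::real) \<partial>M01)"
  proof (intro Bochner_Integration.integral_cong refl)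
    fix x :: real assume x: "x \<in> space M01"
    have "F x \<in> R" "x \<in> A (F x)" unfolding R_def A_def using x by auto
    from sum_ind_single[where I=R and S=A and c="\<lambda>_. 1::real", OF fR dj this]
    show "(\<Sum>a\<in>R. 1 * indicator (A a) x) = (1::real)" by simp
  qed
  moreover have "(\<integral>x. (\<Sum>a\<in>R. 1 * indicator (A a) x) \<partial>M01) = (\<Sum>a\<in>R. 1 * measure M01 (A a))"
    using fR As by (rule integral_indsum_real)
  ultimately show "(\<Sum>a\<in>R. measure M01 (A a)) = 1" by (simp add: measure_M01_space)
qed

context
  fixes p :: real and T :: "(real \<Rightarrow> complex) \<Rightarrow> (real \<Rightarrow> complex)"
  assumes p: "1 \<le> p" and bT: "bounded_op p T" and nT: "narrow p T"
begin

lemma simple_ineq: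
  assumes v: "simple_function M01 v" and vn: "lp_norm p v = 1" and F: "simple_function M01 F"
  shows "lp_norm p (\<lambda>x. F x - \<gamma> * (\<integral>y. F y \<partial>M01)) \<le>
     (op_norm p (op_diff idop T) + lp_norm p (\<lambda>x. \<gamma> * v x - T v x)) * lp_norm p F"
proof -
  have p0: "0 < p" using p by simp
  define R where "R = F ` {0..1}"
  define A where "A = (\<lambda>a. F -` {a} \<inter> {0..1::real})"
  note sf = simple_facts[OF F R_def A_def]
  define r where "r a = measure M01 (A a)" for a
  obtain a0 where a0: "a0 \<in> R" using sf(2) by blast
  have ipF: "ipow p (\<lambda>x. h (F x)) = (\<Sum>a\<in>R. cmod (h a) powr p * r a)" for h
  proof -
    have "ipow p (\<lambda>x. h (F x)) = ipow p (\<lambda>x. \<Sum>a\<in>R. h a * indicator (A a) x)"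
      using sf(5)[of _ h] by (intro ipow_cong_space) simp
    also have "\<dots> = (\<Sum>a\<in>R. cmod (h a) powr p * r a)"
      unfolding r_def by (rule ipow_indsum[OF sf(1) sf(4) sf(3) p0])
    finally show ?thesis .
  qed
  have intF: "(\<integral>y. F y \<partial>M01) = WM R r"
  proof -
    have "(\<integral>y. F y \<partial>M01) = (\<integral>y. (\<Sum>a\<in>R. a * indicator (A a) y) \<partial>M01)"
      using sf(5)[of _ "\<lambda>a. a"] by (intro Bochner_Integration.integral_cong) auto
    also have "\<dots> = (\<Sum>a\<in>R. (\<integral>y. a * indicator (A a) y \<partial>M01))"
      using sf(1) sf(3) p0 p
      by (intro Bochner_Integration.integral_sum integrable_mult_right Lp_integrable[OF Lp_indicator]) auto
    also have "\<dots> = WM R r"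
      unfolding WM_def r_def using sf(3) by (intro sum.cong refl) (simp add: integral_indicator_complex mult.commute)
    finally show ?thesis .
  qed
  have "WF p \<gamma> R r \<le> (op_norm p (op_diff idop T) + lp_norm p (\<lambda>x. \<gamma> * v x - T v x)) * WN p R r"
    using sf(6) unfolding r_def by (intro disc_general[OF p bT nT v vn sf(1) a0]) (auto simp: r_def)
  moreover have "lp_norm p F = WN p R r"
    unfolding lp_norm_ipow WN_def using ipF[of "\<lambda>a. a"] by (simp add: mult.commute)
  moreover have "lp_norm p (\<lambda>x. F x - \<gamma> * (\<integral>y. F y \<partial>M01)) = WF p \<gamma> R r"
    unfolding lp_norm_ipow WF_def intF using ipF[of "\<lambda>a. a - \<gamma> * WM R r"] by (simp add: mult.commute)
  ultimately show ?thesis by simp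
qed

end

lemma lp_norm_const_diff:
  assumes f: "f \<in> Lp_space p" and g: "g \<in> Lp_space p" and p: "1 \<le> p"
  shows "lp_norm p (\<lambda>x. (f x - c) - (g x - d)) \<le> lp_norm p (\<lambda>x. f x - g x) + cmod (c - d)"
proof -
  have p0: "0 < p" using p by simp
  have "lp_norm p (\<lambda>x. (f x - g x) - (c - d)) \<le> lp_norm p (\<lambda>x. f x - g x) + lp_norm p (\<lambda>x. c - d)"
    using f g p0 by (intro minkowski_diff Lp_diff Lp_const p)
  then show ?thesis using lp_norm_const[OF p0] by (simp add: algebra_simps)
qed

lemma simple_Lp_gen:
  assumes v: "simple_function M01 v" and p: "0 < p"
  shows "v \<in> Lp_space p"
proof -
  have fin: "finite (v ` {0..1})" using simple_functionD(1)[OF v] by simp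
  define B where "B = Max (cmod ` v ` {0..1})"
  show ?thesis
  proof (rule Lp_bounded[where B=B])
    show "v \<in> borel_measurable M01" using v by (rule borel_measurable_simple_function)
    fix x :: real assume "x \<in> {0..1}"
    then show "cmod (v x) \<le> B" unfolding B_def using fin by (intro Max_ge) auto
  qed (use p in auto)
qed

lemma unit_approx:
  assumes u: "u \<in> Lp_space p" and un: "lp_norm p u = 1" and p: "1 \<le> p" and e: "0 < \<epsilon>"
  shows "\<exists>v. simple_function M01 v \<and> lp_norm p v = 1 \<and> lp_norm p (\<lambda>x. v x - u x) < \<epsilon>"
proof -
  have p0: "0 < p" using p by simp
  obtain s where s1: "\<And>i. simple_function M01 (s i)"
    and s2: "(\<lambda>i. lp_norm p (\<lambda>x. s i x - u x)) \<longlonglongrightarrow> 0"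
    using approx_simple[OF u p] by blast
  have "0 < min (\<epsilon>/2) (1/2)" using e by simp
  from order_tendstoD(2)[OF s2 this] obtain N where
    N: "\<And>i. i \<ge> N \<Longrightarrow> lp_norm p (\<lambda>x. s i x - u x) < min (\<epsilon>/2) (1/2)"
    unfolding eventually_sequentially by blast
  define d where "d = lp_norm p (\<lambda>x. s N x - u x)"
  have d: "d < \<epsilon>/2" "d < 1/2" using N[of N] unfolding d_def by auto
  have sNL: "s N \<in> Lp_space p" by (rule simple_Lp_gen[OF s1 p0])
  define n where "n = lp_norm p (s N)"
  have nd: "\<bar>n - 1\<bar> \<le> d" using rev_tri[OF sNL u p] un unfolding n_def d_def by simp
  then have npos: "n > 0" using d by linarith
  define v where "v x = (1 / of_real n) * s N x" for x
  have vs: "simple_function M01 v" unfolding v_def by (intro simple_function_mult simple_function_const s1)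
  have vn: "lp_norm p v = 1" unfolding v_def using lp_norm_scale[OF p0, of "1 / of_real n" "s N"] npos
    by (simp add: n_def norm_divide)
  have "lp_norm p (\<lambda>x. v x - u x) = lp_norm p (\<lambda>x. (1 / of_real n - 1) * s N x + (s N x - u x))"
    unfolding v_def by (simp add: algebra_simps)
  also have "\<dots> \<le> lp_norm p (\<lambda>x. (1 / of_real n - 1) * s N x) + lp_norm p (\<lambda>x. s N x - u x)"
    using sNL u p0 by (intro minkowski Lp_scale Lp_diff p)
  also have "lp_norm p (\<lambda>x. (1 / of_real n - 1) * s N x) = \<bar>1 - n\<bar>"
  proof -
    have "lp_norm p (\<lambda>x. (1 / of_real n - 1) * s N x) = cmod (1 / of_real n - 1) * n"
      unfolding n_def by (rule lp_norm_scale[OF p0])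
    also have "cmod (1 / of_real n - 1 :: complex) = \<bar>1 / n - 1\<bar>"
      by (metis norm_of_real of_real_1 of_real_diff of_real_divide)
    also have "\<bar>1 / n - 1\<bar> * n = \<bar>1 - n\<bar>" using npos by (simp add: abs_mult_pos' field_simps abs_minus_commute)
    finally show ?thesis .
  qed
  finally have "lp_norm p (\<lambda>x. v x - u x) \<le> \<bar>1 - n\<bar> + d" unfolding d_def by simp
  also have "\<dots> < \<epsilon>" using nd d by (simp add: abs_minus_commute)
  finally show ?thesis using vs vn by blast
qed

context
  fixes p :: real and T :: "(real \<Rightarrow> complex) \<Rightarrow> (real \<Rightarrow> complex)"
  assumes p: "1 \<le> p" and bT: "bounded_op p T" and nT: "narrow p T"
begin

lemma general_F:
  assumes v: "simple_function M01 v" and vn: "lp_norm p v = 1" and F: "F \<in> Lp_space p"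
  shows "lp_norm p (\<lambda>x. F x - \<gamma> * (\<integral>y. F y \<partial>M01)) \<le>
     (op_norm p (op_diff idop T) + lp_norm p (\<lambda>x. \<gamma> * v x - T v x)) * lp_norm p F"
proof -
  have p0: "0 < p" using p by simp
  define L where "L = op_norm p (op_diff idop T) + lp_norm p (\<lambda>x. \<gamma> * v x - T v x)"
  obtain s where s1: "\<And>i. simple_function M01 (s i)"
    and s2: "(\<lambda>i. lp_norm p (\<lambda>x. s i x - F x)) \<longlonglongrightarrow> 0"
    and s3: "(\<lambda>i. \<integral>x. s i x \<partial>M01) \<longlonglongrightarrow> (\<integral>x. F x \<partial>M01)"
    using approx_simple[OF F p] by blast
  have sL: "\<And>i. s i \<in> Lp_space p" using simple_Lp[OF p bT nT s1] .
  have ineq: "lp_norm p (\<lambda>x. s i x - \<gamma> * (\<integral>y. s i y \<partial>M01)) \<le> L * lp_norm p (s i)" for i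
    unfolding L_def by (rule simple_ineq[OF p bT nT v vn s1])
  have lim1: "(\<lambda>i. lp_norm p (s i)) \<longlonglongrightarrow> lp_norm p F"
    by (rule tendsto_by_bound[OF rev_tri[OF sL F p] s2])
  have e2: "(\<lambda>i. lp_norm p (\<lambda>x. s i x - F x) + cmod (\<gamma> * (\<integral>y. s i y \<partial>M01) - \<gamma> * (\<integral>y. F y \<partial>M01))) \<longlonglongrightarrow> 0 + cmod (\<gamma> * (\<integral>y. F y \<partial>M01) - \<gamma> * (\<integral>y. F y \<partial>M01))"
    by (intro tendsto_intros s2 s3)
  have lim2: "(\<lambda>i. lp_norm p (\<lambda>x. s i x - \<gamma> * (\<integral>y. s i y \<partial>M01))) \<longlonglongrightarrow> lp_norm p (\<lambda>x. F x - \<gamma> * (\<integral>y. F y \<partial>M01))"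
  proof (rule tendsto_by_bound)
    fix i
    have A1: "(\<lambda>x. s i x - \<gamma> * (\<integral>y. s i y \<partial>M01)) \<in> Lp_space p" using sL p0 by (intro Lp_diff Lp_const)
    have A2: "(\<lambda>x. F x - \<gamma> * (\<integral>y. F y \<partial>M01)) \<in> Lp_space p" using F p0 by (intro Lp_diff Lp_const)
    show "\<bar>lp_norm p (\<lambda>x. s i x - \<gamma> * (\<integral>y. s i y \<partial>M01)) - lp_norm p (\<lambda>x. F x - \<gamma> * (\<integral>y. F y \<partial>M01))\<bar>
      \<le> lp_norm p (\<lambda>x. s i x - F x) + cmod (\<gamma> * (\<integral>y. s i y \<partial>M01) - \<gamma> * (\<integral>y. F y \<partial>M01))"
      using rev_tri[OF A1 A2 p] lp_norm_const_diff[OF sL F p, of i "\<gamma> * (\<integral>y. s i y \<partial>M01)" "\<gamma> * (\<integral>y. F y \<partial>M01)"] by linarith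
  next
    show "(\<lambda>i. lp_norm p (\<lambda>x. s i x - F x) + cmod (\<gamma> * (\<integral>y. s i y \<partial>M01) - \<gamma> * (\<integral>y. F y \<partial>M01))) \<longlonglongrightarrow> 0"
      using e2 by simp
  qed
  have "lp_norm p (\<lambda>x. F x - \<gamma> * (\<integral>y. F y \<partial>M01)) \<le> L * lp_norm p F"
    using lim2 tendsto_mult[OF tendsto_const lim1, of L] ineq by (intro LIMSEQ_le) auto
  then show ?thesis unfolding L_def .
qed

lemma Lcont:
  "\<exists>C\<ge>0. \<forall>u\<in>Lp_space p. \<forall>v\<in>Lp_space p. lp_norm p (\<lambda>x. \<gamma> * v x - T v x) \<le>
      lp_norm p (\<lambda>x. \<gamma> * u x - T u x) + C * lp_norm p (\<lambda>x. v x - u x)"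
proof -
  have p0: "0 < p" using p by simp
  obtain C0 where C0: "C0 \<ge> 0" "\<forall>f\<in>Lp_space p. lp_norm p (T f) \<le> C0 * lp_norm p f"
    using T_bound[OF p bT] by blast
  show ?thesis
  proof (intro exI[of _ "cmod \<gamma> + C0"] conjI ballI)
    show "0 \<le> cmod \<gamma> + C0" using C0 by simp
    fix u v assume u: "u \<in> Lp_space p" and v: "v \<in> Lp_space p"
    have Tu: "T u \<in> Lp_space p" and Tv: "T v \<in> Lp_space p" using T_Lp[OF p bT] u v by auto
    have vu: "(\<lambda>x. v x - u x) \<in> Lp_space p" using u v p0 by (intro Lp_diff)
    have "AE x in M01. T (\<lambda>y. 1 * v y + (-1) * u y) x = 1 * T v x + (-1) * T u x"
      by (rule T_lin[OF p bT v u])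
    then have ae: "AE x in M01. T (\<lambda>y. v y - u y) x = T v x - T u x" by simp
    have "lp_norm p (\<lambda>x. T v x - T u x) = lp_norm p (T (\<lambda>y. v y - u y))"
      using ae Tu Tv T_Lp[OF p bT vu] p0 by (intro lp_norm_cong) (auto intro!: Lp_measurable Lp_diff)
    also have "\<dots> \<le> C0 * lp_norm p (\<lambda>x. v x - u x)" using C0 vu by blast
    finally have TT: "lp_norm p (\<lambda>x. T v x - T u x) \<le> C0 * lp_norm p (\<lambda>x. v x - u x)" .
    have L1: "(\<lambda>x. \<gamma> * u x - T u x) \<in> Lp_space p" using u Tu p0 by (intro Lp_diff Lp_scale)
    have L2: "(\<lambda>x. \<gamma> * (v x - u x) - (T v x - T u x)) \<in> Lp_space p" using u v vu Tu Tv p0 by (intro Lp_diff Lp_scale)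
    have "lp_norm p (\<lambda>x. \<gamma> * v x - T v x) \<le> lp_norm p (\<lambda>x. \<gamma> * u x - T u x) + cmod 1 * lp_norm p (\<lambda>x. \<gamma> * (v x - u x) - (T v x - T u x))"
      by (rule norm_comb[OF p bT nT L1 L2]) (simp add: algebra_simps)
    also have "lp_norm p (\<lambda>x. \<gamma> * (v x - u x) - (T v x - T u x)) \<le> lp_norm p (\<lambda>x. \<gamma> * (v x - u x)) + lp_norm p (\<lambda>x. T v x - T u x)"
      using u v vu Tu Tv p0 by (intro minkowski_diff Lp_scale Lp_diff p)
    also have "lp_norm p (\<lambda>x. \<gamma> * (v x - u x)) = cmod \<gamma> * lp_norm p (\<lambda>x. v x - u x)" by (rule lp_norm_scale[OF p0])
    finally show "lp_norm p (\<lambda>x. \<gamma> * v x - T v x) \<le> lp_norm p (\<lambda>x. \<gamma> * u x - T u x) + (cmod \<gamma> + C0) * lp_norm p (\<lambda>x. v x - u x)"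
      using TT by (simp add: algebra_simps)
  qed
qed

lemma general_u:
  assumes u: "u \<in> Lp_space p" and un: "lp_norm p u = 1" and F: "F \<in> Lp_space p"
  shows "lp_norm p (\<lambda>x. F x - \<gamma> * (\<integral>y. F y \<partial>M01)) \<le>
     (op_norm p (op_diff idop T) + lp_norm p (\<lambda>x. \<gamma> * u x - T u x)) * lp_norm p F"
proof -
  obtain C where C: "C \<ge> 0" "\<forall>u\<in>Lp_space p. \<forall>v\<in>Lp_space p. lp_norm p (\<lambda>x. \<gamma> * v x - T v x) \<le>
      lp_norm p (\<lambda>x. \<gamma> * u x - T u x) + C * lp_norm p (\<lambda>x. v x - u x)"
    using Lcont by blast
  define Onorm where "Onorm = op_norm p (op_diff idop T)"
  define nF where "nF = lp_norm p F"
  have nF0: "0 \<le> nF" unfolding nF_def by (rule lp_norm_nonneg)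
  show ?thesis unfolding Onorm_def[symmetric] nF_def[symmetric]
  proof (rule field_le_epsilon)
    fix e :: real assume e: "0 < e"
    define \<epsilon> where "\<epsilon> = e / (C * nF + 1)"
    have eps: "0 < \<epsilon>" unfolding \<epsilon>_def using e C nF0 by (simp add: add_nonneg_pos)
    obtain v where v: "simple_function M01 v" "lp_norm p v = 1" "lp_norm p (\<lambda>x. v x - u x) < \<epsilon>"
      using unit_approx[OF u un p eps] by blast
    have vL: "v \<in> Lp_space p" by (rule simple_Lp[OF p bT nT v(1)])
    have Lv: "lp_norm p (\<lambda>x. \<gamma> * v x - T v x) \<le> lp_norm p (\<lambda>x. \<gamma> * u x - T u x) + C * \<epsilon>"
    proof -
      have "lp_norm p (\<lambda>x. \<gamma> * v x - T v x) \<le> lp_norm p (\<lambda>x. \<gamma> * u x - T u x) + C * lp_norm p (\<lambda>x. v x - u x)"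
        using C u vL by blast
      also have "C * lp_norm p (\<lambda>x. v x - u x) \<le> C * \<epsilon>" using C v(3) by (intro mult_left_mono) auto
      finally show ?thesis by simp
    qed
    have "lp_norm p (\<lambda>x. F x - \<gamma> * (\<integral>y. F y \<partial>M01)) \<le> (Onorm + lp_norm p (\<lambda>x. \<gamma> * v x - T v x)) * nF"
      unfolding Onorm_def nF_def by (rule general_F[OF v(1) v(2) F])
    also have "\<dots> \<le> (Onorm + (lp_norm p (\<lambda>x. \<gamma> * u x - T u x) + C * \<epsilon>)) * nF"
      using Lv nF0 by (intro mult_right_mono) auto
    also have "\<dots> = (Onorm + lp_norm p (\<lambda>x. \<gamma> * u x - T u x)) * nF + \<epsilon> * (C * nF)" by (simp add: algebra_simps)
    also have "\<epsilon> * (C * nF) \<le> e"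
    proof -
      have "\<epsilon> * (C * nF) = e * (C * nF / (C * nF + 1))" unfolding \<epsilon>_def by simp
      also have "\<dots> \<le> e * 1"
      proof -
        have "0 \<le> C * nF" using C nF0 by simp
        then have "C * nF / (C * nF + 1) \<le> 1" by (simp add: divide_le_eq)
        then show ?thesis using e by (intro mult_left_mono) auto
      qed
      finally show ?thesis by simp
    qed
    finally show "lp_norm p (\<lambda>x. F x - \<gamma> * (\<integral>y. F y \<partial>M01)) \<le> (Onorm + lp_norm p (\<lambda>x. \<gamma> * u x - T u x)) * nF + e"
      by simp
  qed
qed

lemma part1:
  "op_norm p (op_diff idop (op_scale \<gamma> Eop)) \<le> op_norm p (op_diff idop T)
     + Inf {lp_norm p (op_diff (op_scale \<gamma> idop) T u) | u. u \<in> Lp_space p \<and> lp_norm p u = 1}"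
proof -
  have p0: "0 < p" using p by simp
  define Onorm where "Onorm = op_norm p (op_diff idop T)"
  have e1: "op_diff idop (op_scale \<gamma> Eop) f = (\<lambda>x. f x - \<gamma> * (\<integral>y. f y \<partial>M01))" for f
    by (simp add: op_diff_def idop_def op_scale_def Eop_def)
  have e2: "op_diff (op_scale \<gamma> idop) T u = (\<lambda>x. \<gamma> * u x - T u x)" for u
    by (simp add: op_diff_def idop_def op_scale_def)
  have one: "(\<lambda>x. 1::complex) \<in> Lp_space p" "lp_norm p (\<lambda>x. 1::complex) = 1"
    using Lp_const[OF p0] lp_norm_const[OF p0] by auto
  have bound: "op_norm p (op_diff idop (op_scale \<gamma> Eop)) \<le> Onorm + lp_norm p (\<lambda>x. \<gamma> * u x - T u x)"
    if u: "u \<in> Lp_space p" "lp_norm p u = 1" for u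
    unfolding op_norm_def
  proof (rule cSup_least)
    show "{lp_norm p (op_diff idop (op_scale \<gamma> Eop) f) |f. f \<in> Lp_space p \<and> lp_norm p f = 1} \<noteq> {}"
      using one by blast
    fix y assume "y \<in> {lp_norm p (op_diff idop (op_scale \<gamma> Eop) f) |f. f \<in> Lp_space p \<and> lp_norm p f = 1}"
    then obtain f where f: "f \<in> Lp_space p" "lp_norm p f = 1" "y = lp_norm p (\<lambda>x. f x - \<gamma> * (\<integral>y. f y \<partial>M01))"
      unfolding e1 by blast
    show "y \<le> Onorm + lp_norm p (\<lambda>x. \<gamma> * u x - T u x)"
      using general_u[OF u f(1), of \<gamma>] f unfolding Onorm_def by simp
  qed
  have "op_norm p (op_diff idop (op_scale \<gamma> Eop)) - Onorm \<le> Inf {lp_norm p (op_diff (op_scale \<gamma> idop) T u) | u. u \<in> Lp_space p \<and> lp_norm p u = 1}"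
  proof (rule cInf_greatest)
    show "{lp_norm p (op_diff (op_scale \<gamma> idop) T u) | u. u \<in> Lp_space p \<and> lp_norm p u = 1} \<noteq> {}"
      using one by blast
    fix y assume "y \<in> {lp_norm p (op_diff (op_scale \<gamma> idop) T u) | u. u \<in> Lp_space p \<and> lp_norm p u = 1}"
    then obtain u where u: "u \<in> Lp_space p" "lp_norm p u = 1" "y = lp_norm p (\<lambda>x. \<gamma> * u x - T u x)"
      unfolding e2 by blast
    show "op_norm p (op_diff idop (op_scale \<gamma> Eop)) - Onorm \<le> y" using bound[OF u(1,2)] u(3) by simp
  qed
  then show ?thesis unfolding Onorm_def by simp
qed

end

lemma S0_sets: "0 \<le> a \<Longrightarrow> a \<le> 1 \<Longrightarrow> {0..a::real} \<in> sets M01"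
  by (simp add: sets_restrict_space_iff)
lemma S1_sets: "0 \<le> a \<Longrightarrow> a \<le> 1 \<Longrightarrow> {a<..1::real} \<in> sets M01"
  by (simp add: sets_restrict_space_iff subset_eq)
lemma S0_meas: "0 \<le> a \<Longrightarrow> a \<le> 1 \<Longrightarrow> measure M01 {0..a::real} = a"
  by (simp add: measure_restrict_space)
lemma S1_meas:
  assumes "0 \<le> a" "a \<le> 1" shows "measure M01 {a<..1::real} = 1 - a"
proof -
  have "{a<..1::real} = {0..1} - {0..a}" using assms by auto
  moreover have "{0..1::real} \<in> sets M01" by (simp add: sets_restrict_space_iff)
  ultimately show ?thesis
    using finite_measure.finite_measure_Diff[OF fin_M01, of "{0..1}" "{0..a}"] S0_sets[OF assms] S0_meas[OF assms]
      measure_M01_space assms by auto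
qed

definition tv :: "real \<Rightarrow> complex \<Rightarrow> complex \<Rightarrow> real \<Rightarrow> complex" where
  "tv a x0 y0 x = x0 * indicator {0..a} x + y0 * indicator {a<..1} x"

lemma tv_facts:
  assumes a: "0 \<le> a" "a \<le> 1" and p: "1 \<le> p"
  shows "tv a x0 y0 \<in> Lp_space p"
    "ipow p (\<lambda>x. tv a x0 y0 x - c) = cmod (x0 - c) powr p * a + cmod (y0 - c) powr p * (1 - a)"
    "(\<integral>x. tv a x0 y0 x \<partial>M01) = x0 * of_real a + y0 * of_real (1 - a)"
proof -
  have p0: "0 < p" using p by simp
  define S where "S i = (if i = (0::nat) then {0..a} else {a<..1})" for i
  have SI: "i \<in> {0,1} \<Longrightarrow> S i \<in> sets M01" for i unfolding S_def using S0_sets[OF a] S1_sets[OF a] by auto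
  have Sdj: "i \<in> {0,1} \<Longrightarrow> j \<in> {0,1} \<Longrightarrow> i \<noteq> j \<Longrightarrow> S i \<inter> S j = {}" for i j unfolding S_def by auto
  show L: "tv a x0 y0 \<in> Lp_space p"
    unfolding tv_def using S0_sets[OF a] S1_sets[OF a] p0 by (intro Lp_add Lp_scale Lp_indicator)
  have "ipow p (\<lambda>x. tv a x0 y0 x - c) = ipow p (\<lambda>x. \<Sum>i\<in>{0,1}. (if i = 0 then x0 - c else y0 - c) * indicator (S i) x)"
    by (intro ipow_cong_space) (auto simp: tv_def S_def indicator_def)
  also have "\<dots> = (\<Sum>i\<in>{0::nat,1}. cmod (if i = 0 then x0 - c else y0 - c) powr p * measure M01 (S i))"
    by (intro ipow_indsum SI Sdj p0) auto
  also have "\<dots> = cmod (x0 - c) powr p * a + cmod (y0 - c) powr p * (1 - a)"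
    by (simp add: S_def S0_meas[OF a] S1_meas[OF a])
  finally show "ipow p (\<lambda>x. tv a x0 y0 x - c) = cmod (x0 - c) powr p * a + cmod (y0 - c) powr p * (1 - a)" .
  have "(\<integral>x. tv a x0 y0 x \<partial>M01) = (\<integral>x. x0 * indicator {0..a} x \<partial>M01) + (\<integral>x. y0 * indicator {a<..1} x \<partial>M01)"
    unfolding tv_def using S0_sets[OF a] S1_sets[OF a] p0 p
    by (intro Bochner_Integration.integral_add integrable_mult_right Lp_integrable[OF Lp_indicator])
  also have "\<dots> = x0 * of_real a + y0 * of_real (1 - a)"
    using S0_sets[OF a] S1_sets[OF a] by (simp add: integral_indicator_complex S0_meas[OF a] S1_meas[OF a])
  finally show "(\<integral>x. tv a x0 y0 x \<partial>M01) = x0 * of_real a + y0 * of_real (1 - a)" .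
qed

lemma E_apply: "op_diff idop (op_scale 1 Eop) f = (\<lambda>x. f x - (\<integral>y. f y \<partial>M01))"
  by (simp add: op_diff_def idop_def op_scale_def Eop_def)

lemma E_bdd:
  assumes p: "1 \<le> p"
  shows "bdd_above {lp_norm p (op_diff idop (op_scale 1 Eop) f) |f. f \<in> Lp_space p \<and> lp_norm p f = 1}"
proof (rule bdd_aboveI[where M=3])
  have p0: "0 < p" using p by simp
  fix y assume "y \<in> {lp_norm p (op_diff idop (op_scale 1 Eop) f) |f. f \<in> Lp_space p \<and> lp_norm p f = 1}"
  then obtain f where f: "f \<in> Lp_space p" "lp_norm p f = 1" "y = lp_norm p (\<lambda>x. f x - (\<integral>y. f y \<partial>M01))"
    unfolding E_apply by blast
  have "cmod (\<integral>y. f y \<partial>M01) \<le> (\<integral>y. cmod (f y) \<partial>M01)" by (rule integral_norm_bound)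
  also have "\<dots> \<le> (\<integral>y. 1 + cmod (f y) powr p \<partial>M01)"
  proof (rule integral_mono)
    show "integrable M01 (\<lambda>y. cmod (f y))" using Lp_integrable[OF f(1) p] by simp
    show "integrable M01 (\<lambda>y. 1 + cmod (f y) powr p)" using Lp_integrable_pow[OF f(1)] by simp
    fix x
    show "cmod (f x) \<le> 1 + cmod (f x) powr p"
    proof (cases "cmod (f x) \<le> 1")
      case True then show ?thesis by (simp add: add_increasing2)
    next
      case False
      then have "cmod (f x) powr 1 \<le> cmod (f x) powr p" using p by (intro powr_mono) auto
      then show ?thesis using False by simp
    qed
  qed
  also have "\<dots> = 1 + ipow p f" unfolding ipow_def using Lp_integrable_pow[OF f(1)] by (simp add: measure_M01_space)
  also have "ipow p f = 1" using f(2) ipow_lp_norm[OF p0, of f] by simp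
  finally have c: "cmod (\<integral>y. f y \<partial>M01) \<le> 2" by simp
  have "y \<le> lp_norm p f + lp_norm p (\<lambda>x. \<integral>y. f y \<partial>M01)"
    unfolding f(3) using f(1) p0 by (intro minkowski_diff Lp_const p)
  also have "\<dots> \<le> 3" using f(2) c lp_norm_const[OF p0] by simp
  finally show "y \<le> 3" .
qed

lemma E_ratio:
  assumes p: "1 \<le> p" and f: "f \<in> Lp_space p" and N: "lp_norm p f > 0"
  shows "lp_norm p (\<lambda>x. f x - (\<integral>y. f y \<partial>M01)) / lp_norm p f \<le> op_norm p (op_diff idop (op_scale 1 Eop))"
proof -
  have p0: "0 < p" using p by simp
  define n where "n = lp_norm p f"
  define g where "g x = (1 / of_real n) * f x" for x
  have gL: "g \<in> Lp_space p" unfolding g_def using f p0 by (intro Lp_scale)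
  have gn: "lp_norm p g = 1" unfolding g_def using lp_norm_scale[OF p0, of "1 / of_real n" f] N
    by (simp add: n_def norm_divide)
  have "lp_norm p (op_diff idop (op_scale 1 Eop) g) = lp_norm p (\<lambda>x. (1 / of_real n) * (f x - (\<integral>y. f y \<partial>M01)))"
    unfolding E_apply g_def by (simp add: algebra_simps)
  also have "\<dots> = lp_norm p (\<lambda>x. f x - (\<integral>y. f y \<partial>M01)) / n"
    using lp_norm_scale[OF p0, of "1 / of_real n" "\<lambda>x. f x - (\<integral>y. f y \<partial>M01)"] N by (simp add: n_def norm_divide)
  finally have "lp_norm p (\<lambda>x. f x - (\<integral>y. f y \<partial>M01)) / n = lp_norm p (op_diff idop (op_scale 1 Eop) g)" by simp
  also have "\<dots> \<le> op_norm p (op_diff idop (op_scale 1 Eop))"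
    unfolding op_norm_def using gL gn by (intro cSup_upper E_bdd p) auto
  finally show ?thesis unfolding n_def .
qed

lemma alg_main:
  fixes p a :: real
  assumes p: "1 < p" and a: "0 < a" "a < 1"
  defines "b \<equiv> 1 - a" and "r \<equiv> 1 / (p - 1)"
  defines "s \<equiv> a powr (- r)" and "t \<equiv> b powr (- r)"
  shows "s powr p * a + t powr p * b = s + t"
    "(b * (s + t)) powr p * a + (a * (s + t)) powr p * b
       = (s + t) * ((a powr (p - 1) + b powr (p - 1)) * (a powr r + b powr r) powr (p - 1))"
proof -
  have b: "0 < b" unfolding b_def using a by simp
  have r: "r * (p - 1) = 1" "0 < r" unfolding r_def using p by auto
  have s0: "0 < s" "0 < t" unfolding s_def t_def using a b by auto
  have e1: "- r * p + 1 = - r" using r(1) by (simp add: algebra_simps)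
  have sp: "s powr p * a = s"
  proof -
    have "a powr (- r * p + 1) = a powr (- r * p) * a powr 1" by (rule powr_add)
    moreover have "a powr 1 = a" using a by simp
    moreover have "s powr p = a powr (- r * p)" unfolding s_def by (simp add: powr_powr)
    ultimately show ?thesis unfolding s_def e1 by simp
  qed
  have tp: "t powr p * b = t"
  proof -
    have "b powr (- r * p + 1) = b powr (- r * p) * b powr 1" by (rule powr_add)
    moreover have "b powr 1 = b" using b by simp
    moreover have "t powr p = b powr (- r * p)" unfolding t_def by (simp add: powr_powr)
    ultimately show ?thesis unfolding t_def e1 by simp
  qed
  show "s powr p * a + t powr p * b = s + t" using sp tp by simp
  define u where "u = s + t"
  have u: "0 < u" unfolding u_def using s0 by simp
  have pp: "x powr p = x * x powr (p - 1)" if "0 < x" for x :: real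
  proof -
    have "x powr p = x powr (1 + (p - 1))" by simp
    also have "\<dots> = x powr 1 * x powr (p - 1)" by (rule powr_add)
    finally show ?thesis using that by simp
  qed
  have Q: "a powr r + b powr r = u * (a * b) powr r"
  proof -
    have "s * (a * b) powr r = b powr r" unfolding s_def using a b
      by (simp add: powr_mult powr_minus field_simps)
    moreover have "t * (a * b) powr r = a powr r" unfolding t_def using a b
      by (simp add: powr_mult powr_minus field_simps)
    ultimately show ?thesis unfolding u_def by (simp add: algebra_simps)
  qed
  have Qp: "(a powr r + b powr r) powr (p - 1) = u powr (p - 1) * (a * b)"
  proof -
    have "(a powr r + b powr r) powr (p - 1) = u powr (p - 1) * ((a * b) powr r) powr (p - 1)"
      unfolding Q by (rule powr_mult)
    also have "((a * b) powr r) powr (p - 1) = a * b" using a b r by (simp add: powr_powr)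
    finally show ?thesis .
  qed
  have "(b * u) powr p * a + (a * u) powr p * b = u powr p * (a * b) * (a powr (p - 1) + b powr (p - 1))"
    using pp[OF a(1)] pp[OF b] by (simp add: powr_mult algebra_simps)
  also have "u powr p * (a * b) = u * (u powr (p - 1) * (a * b))" using pp[OF u] by simp
  finally show "(b * (s + t)) powr p * a + (a * (s + t)) powr p * b
       = (s + t) * ((a powr (p - 1) + b powr (p - 1)) * (a powr r + b powr r) powr (p - 1))"
    unfolding Qp u_def[symmetric] by (simp add: algebra_simps)
qed

lemma Cp_one:
  "2 \<le> op_norm 1 (op_diff idop (op_scale 1 Eop))"
proof (rule field_le_epsilon)
  fix e :: real assume e: "0 < e"
  define t where "t = min (1/2) (e/2)"
  have t: "0 < t" "t < 1" "t \<le> e/2" unfolding t_def using e by auto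
  have a: "0 \<le> t" "t \<le> 1" using t by auto
  define f where "f = tv t (1 / of_real t) 0"
  note tf = tv_facts[OF a order.refl, of "1 / of_real t" 0]
  have fL: "f \<in> Lp_space 1" unfolding f_def by (rule tf(1))
  have int: "(\<integral>x. f x \<partial>M01) = 1" unfolding f_def tf(3) using t by simp
  have nf: "lp_norm 1 f = 1"
    unfolding lp_norm_ipow f_def using tf(2)[of 0] t by (simp add: norm_divide)
  have "ipow 1 (\<lambda>x. f x - 1) = cmod (1 / complex_of_real t - 1) * t + (1 - t)"
    unfolding f_def using tf(2)[of 1] t by simp
  also have "cmod (1 / complex_of_real t - 1) = 1 / t - 1"
  proof -
    have "1 / complex_of_real t - 1 = of_real (1 / t - 1)" by simp
    moreover have "1 / t - 1 \<ge> 0" using t by (simp add: field_simps)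
    ultimately show ?thesis by (simp only: norm_of_real abs_of_nonneg)
  qed
  also have "(1 / t - 1) * t + (1 - t) = 2 - 2 * t" using t by (simp add: field_simps)
  finally have "ipow 1 (\<lambda>x. f x - 1) = 2 - 2 * t" .
  then have n2: "lp_norm 1 (\<lambda>x. f x - (\<integral>y. f y \<partial>M01)) = 2 - 2 * t"
    unfolding int lp_norm_ipow using t by simp
  have "lp_norm 1 (\<lambda>x. f x - (\<integral>y. f y \<partial>M01)) / lp_norm 1 f \<le> op_norm 1 (op_diff idop (op_scale 1 Eop))"
    using nf by (intro E_ratio[OF _ fL]) auto
  then show "2 \<le> op_norm 1 (op_diff idop (op_scale 1 Eop)) + e" using n2 nf t by simp
qed

lemma one_le_E:
  assumes p: "1 \<le> p"
  shows "1 \<le> op_norm p (op_diff idop (op_scale 1 Eop))"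
proof -
  have p0: "0 < p" using p by simp
  have a: "0 \<le> (1/2::real)" "(1/2::real) \<le> 1" by auto
  define f where "f = tv (1/2) 1 (-1)"
  note tf = tv_facts[OF a p, of 1 "-1"]
  have fL: "f \<in> Lp_space p" unfolding f_def by (rule tf(1))
  have int: "(\<integral>x. f x \<partial>M01) = 0" unfolding f_def tf(3) by simp
  have i0: "ipow p (\<lambda>x. f x - 0) = 1" unfolding f_def tf(2) by simp
  have nf: "lp_norm p f = 1" using i0 by (simp add: lp_norm_ipow)
  have "lp_norm p (\<lambda>x. f x - (\<integral>y. f y \<partial>M01)) / lp_norm p f \<le> op_norm p (op_diff idop (op_scale 1 Eop))"
    using nf by (intro E_ratio fL p) auto
  then show ?thesis using nf int by simp
qed

lemma G_le_E:
  assumes p: "1 < p" and a: "0 < \<alpha>" "\<alpha> < 1"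
  shows "(\<alpha> powr (p - 1) + (1 - \<alpha>) powr (p - 1)) powr (1 / p)
        * (\<alpha> powr (1 / (p - 1)) + (1 - \<alpha>) powr (1 / (p - 1))) powr (1 - 1 / p)
       \<le> op_norm p (op_diff idop (op_scale 1 Eop))"
proof -
  have p1: "1 \<le> p" and p0: "0 < p" using p by auto
  define b where "b = 1 - \<alpha>"
  define r where "r = 1 / (p - 1)"
  define s where "s = \<alpha> powr (- r)"
  define t where "t = b powr (- r)"
  define P where "P = \<alpha> powr (p - 1) + b powr (p - 1)"
  define Q where "Q = \<alpha> powr r + b powr r"
  have b: "0 < b" unfolding b_def using a by simp
  have st: "0 < s" "0 < t" unfolding s_def t_def using a b by auto
  have P0: "0 \<le> P" "0 \<le> Q" unfolding P_def Q_def by auto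
  note am = alg_main[OF p a, folded b_def r_def, folded s_def t_def, folded P_def Q_def]
  have a01: "0 \<le> \<alpha>" "\<alpha> \<le> 1" using a by auto
  define f where "f = tv \<alpha> (of_real s) (- of_real t)"
  note tf = tv_facts[OF a01 p1, of "of_real s" "- of_real t", folded f_def]
  have int: "(\<integral>x. f x \<partial>M01) = of_real (s * \<alpha> - t * b)" unfolding tf(3) b_def by simp
  have i0: "ipow p (\<lambda>x. f x - 0) = s + t"
    using tf(2)[of 0] am(1) st unfolding b_def by simp
  have nf: "lp_norm p f = (s + t) powr (1/p)" using i0 by (simp add: lp_norm_ipow)
  have nfpos: "lp_norm p f > 0" unfolding nf using st by simp
  have x0: "cmod (complex_of_real s - of_real (s * \<alpha> - t * b)) = b * (s + t)"
  proof -
    have "complex_of_real s - of_real (s * \<alpha> - t * b) = of_real (b * (s + t))"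
      unfolding b_def by (simp add: algebra_simps)
    moreover have "0 \<le> b * (s + t)" using b st by simp
    ultimately show ?thesis by (simp only: norm_of_real abs_of_nonneg)
  qed
  have y0: "cmod (- complex_of_real t - of_real (s * \<alpha> - t * b)) = \<alpha> * (s + t)"
  proof -
    have "- complex_of_real t - of_real (s * \<alpha> - t * b) = of_real (- (\<alpha> * (s + t)))"
      unfolding b_def by (simp add: algebra_simps)
    moreover have "0 \<le> \<alpha> * (s + t)" using a st by simp
    ultimately show ?thesis by (simp only: norm_of_real abs_minus_cancel abs_of_nonneg)
  qed
  have i1: "ipow p (\<lambda>x. f x - (\<integral>y. f y \<partial>M01)) = (s + t) * (P * Q powr (p - 1))"
    unfolding int tf(2) x0 y0 using am(2) unfolding b_def by simp
  have n1: "lp_norm p (\<lambda>x. f x - (\<integral>y. f y \<partial>M01)) = ((s + t) * (P * Q powr (p - 1))) powr (1/p)"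
    unfolding lp_norm_ipow i1 ..
  have "lp_norm p (\<lambda>x. f x - (\<integral>y. f y \<partial>M01)) / lp_norm p f = (P * Q powr (p - 1)) powr (1/p)"
    unfolding n1 nf using st by (simp add: powr_mult)
  also have "\<dots> = P powr (1/p) * Q powr (1 - 1/p)"
    using p0 P0 by (simp add: powr_mult powr_powr diff_divide_distrib)
  finally have eq: "lp_norm p (\<lambda>x. f x - (\<integral>y. f y \<partial>M01)) / lp_norm p f = P powr (1/p) * Q powr (1 - 1/p)" .
  have "lp_norm p (\<lambda>x. f x - (\<integral>y. f y \<partial>M01)) / lp_norm p f \<le> op_norm p (op_diff idop (op_scale 1 Eop))"
    using nfpos tf(1) by (intro E_ratio p1)
  then show ?thesis using eq unfolding P_def Q_def b_def r_def by simp
qed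

lemma Cp_le:
  assumes p: "1 \<le> p"
  shows "Cp p \<le> op_norm p (op_diff idop (op_scale 1 Eop))"
proof (cases "p = 1")
  case True
  then show ?thesis using Cp_one by (simp add: Cp_def)
next
  case False
  then have p1: "1 < p" using p by simp
  have "(SUP \<alpha>\<in>{0..1::real}. (\<alpha> powr (p - 1) + (1 - \<alpha>) powr (p - 1)) powr (1 / p)
        * (\<alpha> powr (1 / (p - 1)) + (1 - \<alpha>) powr (1 / (p - 1))) powr (1 - 1 / p))
      \<le> op_norm p (op_diff idop (op_scale 1 Eop))"
  proof (rule cSUP_least)
    fix \<alpha> :: real assume "\<alpha> \<in> {0..1}"
    then consider "\<alpha> = 0" | "\<alpha> = 1" | "0 < \<alpha> \<and> \<alpha> < 1" by fastforce
    then show "(\<alpha> powr (p - 1) + (1 - \<alpha>) powr (p - 1)) powr (1 / p)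
        * (\<alpha> powr (1 / (p - 1)) + (1 - \<alpha>) powr (1 / (p - 1))) powr (1 - 1 / p)
      \<le> op_norm p (op_diff idop (op_scale 1 Eop))"
    proof cases
      case 1 then show ?thesis using one_le_E[OF p] by simp
    next
      case 2 then show ?thesis using one_le_E[OF p] by simp
    next
      case 3 then show ?thesis using G_le_E[OF p1] by blast
    qed
  qed simp
  then show ?thesis using False by (simp add: Cp_def)
qed

theorem theorem1p3:
  fixes p :: real and T :: "(real \<Rightarrow> complex) \<Rightarrow> (real \<Rightarrow> complex)"
  assumes "1 \<le> p"
    and "bounded_op p T"
    and "narrow p T"
  shows "(\<forall>\<gamma>::complex.
           op_norm p (op_diff idop T)
           + Inf {lp_norm p (op_diff (op_scale \<gamma> idop) T u) | u. u \<in> Lp_space p \<and> lp_norm p u = 1}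
           \<ge> op_norm p (op_diff idop (op_scale \<gamma> Eop)))
       \<and> op_norm p (op_diff idop T)
           + Inf {lp_norm p (op_diff idop T u) | u. u \<in> Lp_space p \<and> lp_norm p u = 1}
           \<ge> Cp p"
proof -
  have P1: "\<forall>\<gamma>::complex.
           op_norm p (op_diff idop T)
           + Inf {lp_norm p (op_diff (op_scale \<gamma> idop) T u) | u. u \<in> Lp_space p \<and> lp_norm p u = 1}
           \<ge> op_norm p (op_diff idop (op_scale \<gamma> Eop))"
    using part1[OF assms] by blast
  have e: "op_diff (op_scale 1 idop) T = op_diff idop T"
    by (intro ext) (simp add: op_diff_def op_scale_def idop_def)
  have "Cp p \<le> op_norm p (op_diff idop (op_scale 1 Eop))" by (rule Cp_le[OF assms(1)])
  also have "\<dots> \<le> op_norm p (op_diff idop T)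
           + Inf {lp_norm p (op_diff (op_scale 1 idop) T u) | u. u \<in> Lp_space p \<and> lp_norm p u = 1}"
    by (rule part1[OF assms])
  finally show ?thesis using P1 unfolding e by simp
qed

end
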